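(* Let $a\in BC(\mathbf{R})$, $a\ge0$, with $a(x)\ge\varepsilon_1>0$ for $|x|\ge L$ ($L>0$), and let $V\in BC^1(\mathbf{R})$ with $V>0$ and $V'(x)x\le0$ on $\mathbf{R}$. There is a constant $C^*>0$ depending only on $L$ such that if $V(0)<1/(4C^* )$, then there exists $C>0$ such that for every $[u_0,u_1]\in C_0^\infty(\mathbf{R})\times C_0^\infty(\mathbf{R})$ the corresponding smooth solution $u$ of $u_{tt}-u_{xx}+V(x)u+a(x)u_t=0$, $u(0)=u_0$, $u_t(0)=u_1$ satisfies \[(1+t)\int_{|x|\le L}|u(t,x)|^2dx\le C I_0^2\quad(t\ge0),\] where $I_0^2:=\|u_0\|_{H^1}^2+\|u_1\|^2+\big\|\frac{u_1+a(\cdot)u_0}{\sqrt{V(\cdot)}}\big\|^2$.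
   Context: $\|\cdot\|$ is the $L^2(\mathbf{R})$-norm. *)

theory Defs
  imports "HOL-Analysis.Analysis"
begin

definition BC :: "(real \<Rightarrow> real) \<Rightarrow> bool" where
  "BC f \<longleftrightarrow> continuous_on UNIV f \<and> bounded (range f)"

definition BC1 :: "(real \<Rightarrow> real) \<Rightarrow> bool" where
  "BC1 f \<longleftrightarrow> BC f \<and> (\<forall>x. f differentiable (at x)) \<and> BC (deriv f)"

definition C0_inf :: "(real \<Rightarrow> real) \<Rightarrow> bool" where
  "C0_inf f \<longleftrightarrow> (\<forall>n x. ((deriv ^^ n) f) differentiable (at x))
                 \<and> bounded {x. f x \<noteq> 0}"

definition is_solution ::
  "(real \<Rightarrow> real) \<Rightarrow> (real \<Rightarrow> real) \<Rightarrow> (real \<Rightarrow> real) \<Rightarrow> (real \<Rightarrow> real)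
   \<Rightarrow> (real \<Rightarrow> real \<Rightarrow> real) \<Rightarrow> bool" where
  "is_solution a V u0 u1 u \<longleftrightarrow>
    (\<exists>ut ux utt utx uxx :: real \<Rightarrow> real \<Rightarrow> real.
      (\<forall>t\<ge>0. \<forall>x.
         ((\<lambda>s. u s x) has_real_derivative ut t x) (at t within {0..}) \<and>
         ((\<lambda>y. u t y) has_real_derivative ux t x) (at x) \<and>
         ((\<lambda>s. ut s x) has_real_derivative utt t x) (at t within {0..}) \<and>
         ((\<lambda>y. ut t y) has_real_derivative utx t x) (at x) \<and>
         ((\<lambda>y. ux t y) has_real_derivative uxx t x) (at x) \<and>
         utt t x - uxx t x + V x * u t x + a x * ut t x = 0) \<and>
      continuous_on ({0..} \<times> UNIV) (\<lambda>(t,x). u t x) \<and>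
      continuous_on ({0..} \<times> UNIV) (\<lambda>(t,x). ut t x) \<and>
      continuous_on ({0..} \<times> UNIV) (\<lambda>(t,x). ux t x) \<and>
      continuous_on ({0..} \<times> UNIV) (\<lambda>(t,x). utt t x) \<and>
      continuous_on ({0..} \<times> UNIV) (\<lambda>(t,x). utx t x) \<and>
      continuous_on ({0..} \<times> UNIV) (\<lambda>(t,x). uxx t x) \<and>
      (\<forall>x. u 0 x = u0 x) \<and> (\<forall>x. ut 0 x = u1 x))"

definition I0sq :: "(real \<Rightarrow> real) \<Rightarrow> (real \<Rightarrow> real) \<Rightarrow> (real \<Rightarrow> real) \<Rightarrow> (real \<Rightarrow> real) \<Rightarrow> real" where
  "I0sq a V u0 u1 =
     (LINT x|lborel. (u0 x)\<^sup>2) + (LINT x|lborel. (deriv u0 x)\<^sup>2)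
   + (LINT x|lborel. (u1 x)\<^sup>2)
   + (LINT x|lborel. ((u1 x + a x * u0 x) / sqrt (V x))\<^sup>2)"

end

theory Submission
  imports Defs
begin

lemma deriv_within_extend:
  fixes f :: "real \<Rightarrow> real"
  assumes "(f has_real_derivative D) (at t within {0..T})" "0 \<le> t" "t < T"
  shows "(f has_real_derivative D) (at t within {0..})"
proof -
  have "at t within {0..T} = at t within {0..}"
    by (rule at_within_nhd[where S="{..<T}"]) (use assms in auto)
  then show ?thesis using assms(1) by simp
qed

lemma ftc_t:
  fixes f :: "real \<Rightarrow> real"
  assumes "0 \<le> S" "S \<le> T" "\<And>t. t \<in> {S..T} \<Longrightarrow> (f has_real_derivative f' t) (at t within {0..})"
  shows "(f' has_integral (f T - f S)) {S..T}"
proof (rule fundamental_theorem_of_calculus[OF assms(2)])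
  fix x assume x: "x \<in> {S..T}"
  have "(f has_real_derivative f' x) (at x within {S..T})"
    by (rule DERIV_subset[OF assms(3)[OF x]]) (use assms(1) in auto)
  then show "(f has_vector_derivative f' x) (at x within {S..T})"
    by (simp add: has_real_derivative_iff_has_vector_derivative)
qed

lemma ftc_x:
  fixes f :: "real \<Rightarrow> real"
  assumes "c \<le> d" "\<And>x. x \<in> {c..d} \<Longrightarrow> (f has_real_derivative f' x) (at x)"
  shows "(f' has_integral (f d - f c)) {c..d}"
proof (rule fundamental_theorem_of_calculus[OF assms(1)])
  fix x assume x: "x \<in> {c..d}"
  have "(f has_real_derivative f' x) (at x within {c..d})"
    by (rule DERIV_subset[OF assms(2)[OF x]]) auto
  then show "(f has_vector_derivative f' x) (at x within {c..d})"
    by (simp add: has_real_derivative_iff_has_vector_derivative)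
qed

lemma swap_int:
  fixes h :: "real \<Rightarrow> real \<Rightarrow> real"
  assumes "continuous_on ({S..T} \<times> {c..d}) (\<lambda>p. h (fst p) (snd p))"
  shows "integral {c..d} (\<lambda>x. integral {S..T} (\<lambda>t. h t x)) = integral {S..T} (\<lambda>t. integral {c..d} (h t))"
proof -
  have "continuous_on ({c..d} \<times> {S..T}) (\<lambda>p. (\<lambda>q. h (fst q) (snd q)) (snd p, fst p))"
    by (rule continuous_on_compose2[OF assms]) (auto intro!: continuous_intros)
  then have "continuous_on ({c..d} \<times> {S..T}) (\<lambda>p. h (snd p) (fst p))" by simp
  then have c: "continuous_on (cbox (c,S) (d,T)) (\<lambda>(x,t). h t x)"
    by (simp add: cbox_Pair_eq case_prod_beta)
  from integral_swap_continuous[OF c] show ?thesis by simp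
qed

lemma param_cont_t:
  fixes h :: "real \<Rightarrow> real \<Rightarrow> real"
  assumes "continuous_on ({S..T} \<times> {c..d}) (\<lambda>p. h (fst p) (snd p))"
  shows "continuous_on {S..T} (\<lambda>t. integral {c..d} (h t))"
proof -
  have "continuous_on ({S..T} \<times> cbox c d) (\<lambda>(t,x). h t x)"
    using assms by (simp add: case_prod_beta)
  from integral_continuous_on_param[OF this] show ?thesis by simp
qed

lemma param_cont_x:
  fixes h :: "real \<Rightarrow> real \<Rightarrow> real"
  assumes "continuous_on ({S..T} \<times> {c..d}) (\<lambda>p. h (fst p) (snd p))"
  shows "continuous_on {c..d} (\<lambda>x. integral {S..T} (\<lambda>t. h t x))"
proof -
  have "continuous_on ({c..d} \<times> {S..T}) (\<lambda>p. (\<lambda>q. h (fst q) (snd q)) (snd p, fst p))"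
    by (rule continuous_on_compose2[OF assms]) (auto intro!: continuous_intros)
  then have "continuous_on ({c..d} \<times> {S..T}) (\<lambda>p. h (snd p) (fst p))" by simp
  then have "continuous_on ({c..d} \<times> cbox S T) (\<lambda>(x,t). h t x)"
    by (simp add: case_prod_beta)
  from integral_continuous_on_param[OF this] show ?thesis by simp
qed

lemma cont_slice_t:
  fixes h :: "real \<Rightarrow> real \<Rightarrow> real"
  assumes "continuous_on ({S..T} \<times> {c..d}) (\<lambda>p. h (fst p) (snd p))" "t \<in> {S..T}"
  shows "continuous_on {c..d} (h t)"
  by (rule continuous_on_compose2[OF assms(1), where f="\<lambda>x. (t, x)", simplified])
     (use assms(2) in \<open>auto intro!: continuous_intros\<close>)

lemma cont_slice_x:
  fixes h :: "real \<Rightarrow> real \<Rightarrow> real"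
  assumes "continuous_on ({S..T} \<times> {c..d}) (\<lambda>p. h (fst p) (snd p))" "x \<in> {c..d}"
  shows "continuous_on {S..T} (\<lambda>t. h t x)"
  by (rule continuous_on_compose2[OF assms(1), where f="\<lambda>t. (t, x)", simplified])
     (use assms(2) in \<open>auto intro!: continuous_intros\<close>)

lemma div_identity:
  fixes A B Ad Bd G :: "real \<Rightarrow> real \<Rightarrow> real"
  assumes ST: "0 \<le> S" "S \<le> T" and cd: "c \<le> d"
  and dA: "\<And>t x. t \<in> {S..T} \<Longrightarrow> x \<in> {c..d} \<Longrightarrow> ((\<lambda>s. A s x) has_real_derivative Ad t x) (at t within {0..})"
  and dB: "\<And>t x. t \<in> {S..T} \<Longrightarrow> x \<in> {c..d} \<Longrightarrow> ((\<lambda>y. B t y) has_real_derivative Bd t x) (at x)"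
  and cAd: "continuous_on ({S..T} \<times> {c..d}) (\<lambda>p. Ad (fst p) (snd p))"
  and cA0: "continuous_on {c..d} (A S)"
  and Bc: "\<And>t. t \<in> {S..T} \<Longrightarrow> B t c = 0" and Bd0: "\<And>t. t \<in> {S..T} \<Longrightarrow> B t d = 0"
  and G: "\<And>t x. t \<in> {S..T} \<Longrightarrow> x \<in> {c..d} \<Longrightarrow> G t x = Ad t x + Bd t x"
  shows "integral {c..d} (A T) - integral {c..d} (A S) = integral {S..T} (\<lambda>t. integral {c..d} (G t))"
    and "(\<lambda>t. integral {c..d} (G t)) integrable_on {S..T}"
    and "\<And>t. t \<in> {S..T} \<Longrightarrow> G t integrable_on {c..d}"
proof -
  have AT: "A T x = A S x + integral {S..T} (\<lambda>t. Ad t x)" if x: "x \<in> {c..d}" for x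
  proof -
    have "((\<lambda>t. Ad t x) has_integral (A T x - A S x)) {S..T}"
      by (rule ftc_t[OF ST]) (use dA x in auto)
    then show ?thesis by (simp add: integral_unique)
  qed
  have Bint: "(Bd t has_integral 0) {c..d}" if t: "t \<in> {S..T}" for t
  proof -
    have "(Bd t has_integral (B t d - B t c)) {c..d}"
      by (rule ftc_x[OF cd]) (use dB t in auto)
    then show ?thesis using Bc[OF t] Bd0[OF t] by simp
  qed
  have Adint: "Ad t integrable_on {c..d}" if t: "t \<in> {S..T}" for t
    by (rule integrable_continuous_real, rule cont_slice_t[OF cAd t])
  have GI: "integral {c..d} (G t) = integral {c..d} (Ad t)" if t: "t \<in> {S..T}" for t
  proof -
    have "integral {c..d} (G t) = integral {c..d} (\<lambda>x. Ad t x + Bd t x)"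
      by (rule integral_cong) (use G t in auto)
    also have "\<dots> = integral {c..d} (Ad t) + integral {c..d} (Bd t)"
      by (rule integral_add[OF Adint[OF t]]) (use Bint[OF t] in blast)
    finally show ?thesis using Bint[OF t] by (simp add: integral_unique)
  qed
  show "G t integrable_on {c..d}" if t: "t \<in> {S..T}" for t
  proof -
    have "(\<lambda>x. Ad t x + Bd t x) integrable_on {c..d}"
      by (rule integrable_add[OF Adint[OF t]]) (use Bint[OF t] in blast)
    then show ?thesis by (rule integrable_eq) (use G t in auto)
  qed
  have cI: "continuous_on {S..T} (\<lambda>t. integral {c..d} (Ad t))"
    by (rule param_cont_t[OF cAd])
  show "(\<lambda>t. integral {c..d} (G t)) integrable_on {S..T}"
    by (rule integrable_eq[OF integrable_continuous_real[OF cI]]) (use GI in auto)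
  have "integral {c..d} (A T) = integral {c..d} (\<lambda>x. A S x + integral {S..T} (\<lambda>t. Ad t x))"
    by (rule integral_cong) (use AT in auto)
  also have "\<dots> = integral {c..d} (A S) + integral {c..d} (\<lambda>x. integral {S..T} (\<lambda>t. Ad t x))"
    by (rule integral_add) (auto intro!: integrable_continuous_real cA0 param_cont_x[OF cAd])
  also have "integral {c..d} (\<lambda>x. integral {S..T} (\<lambda>t. Ad t x)) = integral {S..T} (\<lambda>t. integral {c..d} (Ad t))"
    by (rule swap_int[OF cAd])
  also have "\<dots> = integral {S..T} (\<lambda>t. integral {c..d} (G t))"
    by (rule integral_cong) (use GI in auto)
  finally show "integral {c..d} (A T) - integral {c..d} (A S) = integral {S..T} (\<lambda>t. integral {c..d} (G t))"
    by simp
qed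

lemma prim_eq:
  fixes h :: "real \<Rightarrow> real"
  assumes "continuous_on {0..T} h" "t \<in> {0..T}"
  shows "integral {0..t} h = integral {0..T} (\<lambda>s. h (min s t)) - (T - t) * h t"
proof -
  have c: "continuous_on {0..T} (\<lambda>s. h (min s t))"
    by (rule continuous_on_compose2[OF assms(1)]) (use assms(2) in \<open>auto intro!: continuous_intros\<close>)
  have "integral {0..T} (\<lambda>s. h (min s t)) = integral {0..t} (\<lambda>s. h (min s t)) + integral {t..T} (\<lambda>s. h (min s t))"
    by (rule Henstock_Kurzweil_Integration.integral_combine[symmetric]) (use assms(2) c in \<open>auto intro: integrable_continuous_real\<close>)
  also have "integral {0..t} (\<lambda>s. h (min s t)) = integral {0..t} h"
    by (rule integral_cong) auto
  also have "integral {t..T} (\<lambda>s. h (min s t)) = integral {t..T} (\<lambda>s. h t)"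
    by (rule integral_cong) auto
  also have "\<dots> = (T - t) * h t" using assms(2) by simp
  finally show ?thesis by simp
qed

lemma cont_prim:
  fixes h :: "real \<Rightarrow> real \<Rightarrow> real" and X :: "real set"
  assumes c: "continuous_on ({0..T} \<times> X) (\<lambda>p. h (fst p) (snd p))"
  shows "continuous_on ({0..T} \<times> X) (\<lambda>p. integral {0..fst p} (\<lambda>s. h s (snd p)))"
proof -
  have c1: "continuous_on (({0..T} \<times> X) \<times> cbox 0 T) (\<lambda>(p, s). h (min s (fst p)) (snd p))"
  proof -
    have "continuous_on (({0..T} \<times> X) \<times> cbox 0 T)
       (\<lambda>q. (\<lambda>p. h (fst p) (snd p)) ((\<lambda>q. (min (snd q) (fst (fst q)), snd (fst q))) q))"
      by (rule continuous_on_compose2[OF c]) (auto intro!: continuous_intros)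
    then show ?thesis by (simp add: case_prod_beta)
  qed
  have c2: "continuous_on ({0..T} \<times> X) (\<lambda>p. integral (cbox 0 T) (\<lambda>s. h (min s (fst p)) (snd p)))"
    by (rule integral_continuous_on_param[OF c1])
  have c3: "continuous_on ({0..T} \<times> X) (\<lambda>p. integral {0..T} (\<lambda>s. h (min s (fst p)) (snd p)) - (T - fst p) * h (fst p) (snd p))"
    using c2 c by (auto intro!: continuous_intros)
  show ?thesis
  proof (rule continuous_on_eq[OF c3])
    fix p assume p: "p \<in> {0..T} \<times> X"
    have "continuous_on {0..T} (\<lambda>s. h s (snd p))"
      by (rule continuous_on_compose2[OF c, where f="\<lambda>s. (s, snd p)", simplified]) (use p in \<open>auto intro!: continuous_intros\<close>)
    from prim_eq[OF this, of "fst p"] p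
    show "integral {0..T} (\<lambda>s. h (min s (fst p)) (snd p)) - (T - fst p) * h (fst p) (snd p) =
      integral {0..fst p} (\<lambda>s. h s (snd p))" by auto
  qed
qed


definition psi :: "real \<Rightarrow> real" where "psi z = (min z 0)^2"

lemma psi_deriv: "(psi has_real_derivative 2 * min z 0) (at z)"
proof -
  consider "z < 0" | "z > 0" | "z = 0" by linarith
  then show ?thesis
  proof cases
    case 1
    have "((\<lambda>y. y^2) has_real_derivative 2 * z) (at z)"
      by (auto intro!: derivative_eq_intros)
    then have "(psi has_real_derivative 2 * z) (at z)"
      by (rule has_field_derivative_transform_within_open[where S="{..<0}"]) (use 1 in \<open>auto simp: psi_def\<close>)
    then show ?thesis using 1 by simp
  next
    case 2
    have "((\<lambda>y. 0) has_real_derivative 0) (at z)" by simp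
    then have "(psi has_real_derivative 0) (at z)"
      by (rule has_field_derivative_transform_within_open[where S="{0<..}"]) (use 2 in \<open>auto simp: psi_def\<close>)
    then show ?thesis using 2 by simp
  next
    case 3
    have lim: "((\<lambda>y. min y 0) \<longlongrightarrow> 0) (at (0::real))"
    proof -
      have "isCont (\<lambda>y::real. min y 0) 0" by (intro continuous_intros)
      then show ?thesis by (simp add: isCont_def)
    qed
    have ev: "\<forall>\<^sub>F y in at (0::real). min y 0 = (psi y - psi 0) / (y - 0)"
      unfolding eventually_at_filter
      by (rule always_eventually) (auto simp: psi_def power2_eq_square min_def)
    have "((\<lambda>y. (psi y - psi 0) / (y - 0)) \<longlongrightarrow> 0) (at (0::real))"
      using tendsto_cong[OF ev] lim by simp
    then show ?thesis using 3 by (simp add: has_field_derivative_iff)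
  qed
qed

lemma psi_chain[derivative_intros]:
  "(g has_real_derivative Db) (at x within s) \<Longrightarrow>
   ((\<lambda>y. psi (g y)) has_real_derivative (2 * min (g x) 0) * Db) (at x within s)"
  by (rule DERIV_chain2[OF psi_deriv])

lemma psi_nonneg: "0 \<le> psi z" by (simp add: psi_def)
lemma psi_zero: "0 \<le> z \<Longrightarrow> psi z = 0" by (simp add: psi_def)
lemma psi_pos: "z < 0 \<Longrightarrow> 0 < psi z" by (simp add: psi_def)
lemma psi_cont[continuous_intros]: "continuous_on S f \<Longrightarrow> continuous_on S (\<lambda>x. psi (f x))"
  unfolding psi_def by (intro continuous_intros)

locale wave =
  fixes a V u0 u1 :: "real \<Rightarrow> real" and u ut ux utt utx uxx :: "real \<Rightarrow> real \<Rightarrow> real"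
    and A Vm R0 :: real
  assumes d_ut: "\<And>t x. 0 \<le> t \<Longrightarrow> ((\<lambda>s. u s x) has_real_derivative ut t x) (at t within {0..})"
  and d_ux: "\<And>t x. 0 \<le> t \<Longrightarrow> ((\<lambda>y. u t y) has_real_derivative ux t x) (at x)"
  and d_utt: "\<And>t x. 0 \<le> t \<Longrightarrow> ((\<lambda>s. ut s x) has_real_derivative utt t x) (at t within {0..})"
  and d_utx: "\<And>t x. 0 \<le> t \<Longrightarrow> ((\<lambda>y. ut t y) has_real_derivative utx t x) (at x)"
  and d_uxx: "\<And>t x. 0 \<le> t \<Longrightarrow> ((\<lambda>y. ux t y) has_real_derivative uxx t x) (at x)"
  and eq: "\<And>t x. 0 \<le> t \<Longrightarrow> utt t x - uxx t x + V x * u t x + a x * ut t x = 0"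
  and c_u: "continuous_on ({0..} \<times> UNIV) (\<lambda>(t,x). u t x)"
  and c_ut: "continuous_on ({0..} \<times> UNIV) (\<lambda>(t,x). ut t x)"
  and c_ux: "continuous_on ({0..} \<times> UNIV) (\<lambda>(t,x). ux t x)"
  and c_utt: "continuous_on ({0..} \<times> UNIV) (\<lambda>(t,x). utt t x)"
  and c_utx: "continuous_on ({0..} \<times> UNIV) (\<lambda>(t,x). utx t x)"
  and c_uxx: "continuous_on ({0..} \<times> UNIV) (\<lambda>(t,x). uxx t x)"
  and init_u: "\<And>x. u 0 x = u0 x" and init_ut: "\<And>x. ut 0 x = u1 x"
  and a_cont: "continuous_on UNIV a" and a_nn: "\<And>x. 0 \<le> a x" and a_le: "\<And>x. a x \<le> A"
  and V_cont: "continuous_on UNIV V" and V_pos: "\<And>x. 0 < V x" and V_le: "\<And>x. V x \<le> Vm"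
  and V_deriv: "\<And>x. (V has_real_derivative deriv V x) (at x)"
  and V'_cont: "continuous_on UNIV (deriv V)"
  and V'_sign: "\<And>x. deriv V x * x \<le> 0"
  and R0: "0 \<le> R0" and supp0: "\<And>x. R0 < \<bar>x\<bar> \<Longrightarrow> u0 x = 0" and supp1: "\<And>x. R0 < \<bar>x\<bar> \<Longrightarrow> u1 x = 0"
begin

lemma cont2:
  fixes w :: "real \<Rightarrow> real \<Rightarrow> real" and S :: "'a::topological_space set"
  assumes cw: "continuous_on ({0..} \<times> UNIV) (\<lambda>(t,x). w t x)"
  shows "continuous_on S f \<Longrightarrow> continuous_on S g \<Longrightarrow> (\<And>s. s \<in> S \<Longrightarrow> 0 \<le> f s) \<Longrightarrow> continuous_on S (\<lambda>s. w (f s) (g s))"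
proof -
  assume f: "continuous_on S f" and g: "continuous_on S g" and nn: "\<And>s. s \<in> S \<Longrightarrow> 0 \<le> f s"
  have "continuous_on S (\<lambda>s. (\<lambda>(t,x). w t x) ((\<lambda>s. (f s, g s)) s))"
    by (rule continuous_on_compose2[OF cw]) (use f g nn in \<open>auto intro!: continuous_intros\<close>)
  then show ?thesis by simp
qed

lemmas cont_u[continuous_intros] = cont2[OF c_u]
lemmas cont_ut[continuous_intros] = cont2[OF c_ut]
lemmas cont_ux[continuous_intros] = cont2[OF c_ux]
lemmas cont_utt[continuous_intros] = cont2[OF c_utt]
lemmas cont_utx[continuous_intros] = cont2[OF c_utx]
lemmas cont_uxx[continuous_intros] = cont2[OF c_uxx]

lemma cont1:
  fixes w :: "real \<Rightarrow> real" and S :: "'a::topological_space set"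
  assumes cw: "continuous_on UNIV w"
  shows "continuous_on S f \<Longrightarrow> continuous_on S (\<lambda>s. w (f s))"
  by (rule continuous_on_compose2[OF cw]) auto

lemmas cont_a[continuous_intros] = cont1[OF a_cont]
lemmas cont_V[continuous_intros] = cont1[OF V_cont]
lemmas cont_V'[continuous_intros] = cont1[OF V'_cont]

lemma u0_cont: "continuous_on UNIV u0"
proof -
  have "continuous_on UNIV (\<lambda>x. u 0 x)" by (auto intro!: continuous_intros)
  then show ?thesis by (simp add: init_u)
qed

lemma u1_cont: "continuous_on UNIV u1"
proof -
  have "continuous_on UNIV (\<lambda>x. ut 0 x)" by (auto intro!: continuous_intros)
  then show ?thesis by (simp add: init_ut)
qed

lemmas cont_u0[continuous_intros] = cont1[OF u0_cont]
lemmas cont_u1[continuous_intros] = cont1[OF u1_cont]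

lemma ux_repr:
  assumes t: "0 \<le> t"
  shows "ux t x = ux 0 x + integral {0..t} (\<lambda>s. utx s x)"
proof -
  define b where "b = x - 1"
  define e where "e = x + 1"
  define g where "g y = ux 0 y + integral {0..t} (\<lambda>s. utx s y)" for y
  have cg1: "continuous_on {b..e} (\<lambda>y. integral {0..t} (\<lambda>s. utx s y))"
    by (rule param_cont_x) (use t in \<open>auto intro!: continuous_intros\<close>)
  have gc: "continuous_on {b..e} g"
    unfolding g_def using cg1 by (auto intro!: continuous_intros)
  have key: "integral {b..z} g = u t z - u t b" if z: "z \<in> {b..e}" for z
  proof -
    have sub: "{b..z} \<subseteq> {b..e}" using z by auto
    have cg1': "continuous_on {b..z} (\<lambda>y. integral {0..t} (\<lambda>s. utx s y))"
      using cg1 sub continuous_on_subset by blast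
    have "integral {b..z} g = integral {b..z} (ux 0) + integral {b..z} (\<lambda>y. integral {0..t} (\<lambda>s. utx s y))"
      unfolding g_def
      by (rule integral_add) (use cg1' in \<open>auto intro!: integrable_continuous_real continuous_intros\<close>)
    also have "integral {b..z} (ux 0) = u 0 z - u 0 b"
      by (rule integral_unique, rule ftc_x) (use z d_ux in auto)
    also have "integral {b..z} (\<lambda>y. integral {0..t} (\<lambda>s. utx s y)) = integral {0..t} (\<lambda>s. integral {b..z} (utx s))"
      by (rule swap_int) (use t in \<open>auto intro!: continuous_intros\<close>)
    also have "\<dots> = integral {0..t} (\<lambda>s. ut s z - ut s b)"
      by (rule integral_cong, rule integral_unique, rule ftc_x) (use z d_utx in auto)
    also have "\<dots> = (u t z - u t b) - (u 0 z - u 0 b)"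
      by (rule integral_unique, rule ftc_t[where f="\<lambda>s. u s z - u s b"]) (use t in \<open>auto intro!: derivative_eq_intros d_ut\<close>)
    finally show ?thesis by simp
  qed
  have bx: "b < x" "x < e" unfolding b_def e_def by auto
  have "((\<lambda>z. integral {b..z} g) has_real_derivative g x) (at x within {b..e})"
    by (rule integral_has_real_derivative[OF gc]) (use bx in auto)
  then have "((\<lambda>z. integral {b..z} g) has_real_derivative g x) (at x)"
    using at_within_Icc_at[OF bx] by simp
  then have D1: "((\<lambda>z. u t z - u t b) has_real_derivative g x) (at x)"
    by (rule has_field_derivative_transform_within_open[where S="{b<..<e}"]) (use bx key in auto)
  have D2: "((\<lambda>z. u t z - u t b) has_real_derivative ux t x) (at x)"
    by (auto intro!: derivative_eq_intros d_ux t)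
  from DERIV_unique[OF D1 D2] show ?thesis unfolding g_def by simp
qed

lemma d_uxt:
  assumes t: "0 \<le> t"
  shows "((\<lambda>s. ux s x) has_real_derivative utx t x) (at t within {0..})"
proof -
  have "((\<lambda>s. integral {0..s} (\<lambda>r. utx r x)) has_real_derivative utx t x) (at t within {0..t+1})"
    by (rule integral_has_real_derivative) (use t in \<open>auto intro!: continuous_intros\<close>)
  then have "((\<lambda>s. integral {0..s} (\<lambda>r. utx r x)) has_real_derivative utx t x) (at t within {0..})"
    by (rule deriv_within_extend) (use t in auto)
  then have "((\<lambda>s. ux 0 x + integral {0..s} (\<lambda>r. utx r x)) has_real_derivative utx t x) (at t within {0..})"
    by (auto intro!: derivative_eq_intros)
  then show ?thesis
  proof (rule has_field_derivative_transform_within[where d=1])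
    show "\<And>s. s \<in> {0..} \<Longrightarrow> dist s t < 1 \<Longrightarrow> ux 0 x + integral {0..s} (\<lambda>r. utx r x) = ux s x"
      by (metis atLeast_iff ux_repr)
  qed (use t in auto)
qed

end

context wave begin

definition D :: "real \<Rightarrow> real \<Rightarrow> real" where
  "D t x = (ut t x)^2 + (ux t x)^2 + V x * (u t x)^2"

lemma D_nonneg: "0 \<le> D t x"
  unfolding D_def using V_pos[of x] by (auto intro!: add_nonneg_nonneg mult_nonneg_nonneg less_imp_le)

lemma D_ge: "(ut t x)^2 \<le> D t x"
  unfolding D_def using V_pos[of x] by (auto intro!: add_nonneg_nonneg mult_nonneg_nonneg less_imp_le)

lemma zero_deriv_open:
  fixes f :: "real \<Rightarrow> real"
  assumes "(f has_real_derivative D') (at x)" "open S" "x \<in> S" "\<And>y. y \<in> S \<Longrightarrow> f y = 0"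
  shows "D' = 0"
proof -
  have "((\<lambda>y. 0) has_real_derivative D') (at x)"
    by (rule has_field_derivative_transform_within_open[OF assms(1-3)]) (use assms(4) in auto)
  then show ?thesis using DERIV_unique DERIV_const by blast
qed

lemma ux0_zero: assumes "R0 < \<bar>x\<bar>" shows "ux 0 x = 0"
proof (rule zero_deriv_open[OF d_ux[of 0 x], where S="{y. R0 < \<bar>y\<bar>}"])
  show "open {y::real. R0 < \<bar>y\<bar>}" by (intro open_Collect_less continuous_intros)
qed (use assms supp0 init_u in auto)

lemma D0_zero: "R0 < \<bar>x\<bar> \<Longrightarrow> D 0 x = 0"
  unfolding D_def using ux0_zero[of x] supp0[of x] supp1[of x] init_u[of x] init_ut[of x] by simp

lemma fp_core:
  assumes T: "0 < T" and x1: "R0 + T < \<bar>x1\<bar>" and t: "0 \<le> t" "t < T - 1"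
  shows "ut t x1 = 0"
proof -
  define c where "c = x1 - T - 1"
  define d where "d = x1 + T + 1"
  define Af where "Af s x = psi (sqrt ((x - x1)^2 + 1) + s - T) * D s x" for s x
  define Ad where "Ad s x = 2 * min (sqrt ((x - x1)^2 + 1) + s - T) 0 * D s x + psi (sqrt ((x - x1)^2 + 1) + s - T) *
      (2 * ut s x * utt s x + 2 * ux s x * utx s x + V x * (2 * u s x * ut s x))" for s x
  define Bf where "Bf s x = -2 * psi (sqrt ((x - x1)^2 + 1) + s - T) * ut s x * ux s x" for s x
  define Bd where "Bd s x = -2 * (2 * min (sqrt ((x - x1)^2 + 1) + s - T) 0 * ((x - x1) / sqrt ((x - x1)^2 + 1)) * ut s x * ux s x
      + psi (sqrt ((x - x1)^2 + 1) + s - T) * utx s x * ux s x + psi (sqrt ((x - x1)^2 + 1) + s - T) * ut s x * uxx s x)" for s x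
  have cd: "c \<le> d" unfolding c_def d_def using T by simp
  have rpos: "0 < sqrt ((x - x1)^2 + 1)" for x by (smt (verit) real_sqrt_gt_zero zero_le_power2)
  have pos2: "0 < (y - x1)^2 + 1" "(y - x1)^2 + 1 \<noteq> 0" "1 + (y - x1)^2 \<noteq> 0" "\<not> (1 + (y - x1)^2 < 0)" "\<not> ((y - x1)^2 + 1 < 0)" for y
    using zero_le_power2[of "y - x1"] by linarith+
  have dr: "((\<lambda>y. sqrt ((y - x1)^2 + 1)) has_real_derivative (x - x1) / sqrt ((x - x1)^2 + 1)) (at x)" for x
    by (rule derivative_eq_intros refl | simp add: pos2)+ (simp add: field_simps)
  have rge: "\<bar>x - x1\<bar> \<le> sqrt ((x - x1)^2 + 1)" for x
  proof -
    have "\<bar>x - x1\<bar> = sqrt ((x - x1)^2)" by simp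
    also have "\<dots> \<le> sqrt ((x - x1)^2 + 1)" by (rule real_sqrt_le_mono) simp
    finally show ?thesis .
  qed
  have dA: "((\<lambda>s. Af s x) has_real_derivative Ad s x) (at s within {0..})" if s: "0 \<le> s" for s x
    unfolding Af_def Ad_def D_def
    by (rule derivative_eq_intros d_ut d_utt d_uxt refl s | simp add: algebra_simps)+
  have dB: "((\<lambda>y. Bf s y) has_real_derivative Bd s x) (at x)" if s: "0 \<le> s" for s x
    unfolding Bf_def Bd_def
    apply (rule dr derivative_eq_intros d_ux d_utx d_uxx refl s)+
    apply (simp only: mult_zero_left add_0_left diff_0_right add_0_right)
    apply (simp only: algebra_simps)
    done
  have cAd: "continuous_on ({0..t} \<times> {c..d}) (\<lambda>p. Ad (fst p) (snd p))"
    unfolding Ad_def D_def by (auto intro!: continuous_intros)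
  have cA0: "continuous_on {c..d} (Af 0)"
    unfolding Af_def D_def by (auto intro!: continuous_intros)
  have Bc: "Bf s c = 0" if "s \<in> {0..t}" for s
  proof -
    have "T + 1 \<le> sqrt ((c - x1)^2 + 1)" using rge[of c] unfolding c_def by simp
    then show ?thesis unfolding Bf_def using that by (simp add: psi_zero)
  qed
  have Bdd: "Bf s d = 0" if "s \<in> {0..t}" for s
  proof -
    have "T + 1 \<le> sqrt ((d - x1)^2 + 1)" using rge[of d] unfolding d_def by simp
    then show ?thesis unfolding Bf_def using that by (simp add: psi_zero)
  qed
  note DI = div_identity[where A=Af and B=Bf and Ad=Ad and Bd=Bd and G="\<lambda>s x. Ad s x + Bd s x",
      OF _ _ cd _ _ cAd _ Bc Bdd]
  have t0: "0 \<le> (0::real)" "0 \<le> t" using t by auto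
  have I1: "integral {c..d} (Af t) - integral {c..d} (Af 0) = integral {0..t} (\<lambda>s. integral {c..d} (\<lambda>x. Ad s x + Bd s x))"
   and I2: "(\<lambda>s. integral {c..d} (\<lambda>x. Ad s x + Bd s x)) integrable_on {0..t}"
   and I3: "\<And>s. s \<in> {0..t} \<Longrightarrow> (\<lambda>x. Ad s x + Bd s x) integrable_on {c..d}"
    using DI[OF t0 _ _ cA0] dA dB by auto
  have Gle: "Ad s x + Bd s x \<le> 0" if s: "0 \<le> s" for s x
  proof -
    define p where "p = psi (sqrt ((x - x1)^2 + 1) + s - T)"
    define q where "q = 2 * min (sqrt ((x - x1)^2 + 1) + s - T) 0"
    define \<rho> where "\<rho> = (x - x1) / sqrt ((x - x1)^2 + 1)"
    have p: "0 \<le> p" unfolding p_def by (rule psi_nonneg)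
    have q: "q \<le> 0" unfolding q_def by simp
    have rho: "\<bar>\<rho>\<bar> \<le> 1" 
    proof -
      have "\<bar>\<rho>\<bar> = \<bar>x - x1\<bar> / sqrt ((x - x1)^2 + 1)" unfolding \<rho>_def using rpos[of x] by (simp add: abs_divide)
      also have "\<dots> \<le> 1" using rge[of x] rpos[of x] by (simp add: divide_le_eq_1)
      finally show ?thesis .
    qed
    have e: "utt s x = uxx s x - V x * u s x - a x * ut s x" using eq[OF s, of x] by simp
    have G: "Ad s x + Bd s x = q * ((ut s x)^2 + (ux s x)^2 + V x * (u s x)^2 - 2 * \<rho> * ut s x * ux s x)
        - 2 * p * a x * (ut s x)^2"
      unfolding Ad_def Bd_def D_def p_def[symmetric] q_def[symmetric] \<rho>_def[symmetric] e
      by (simp add: algebra_simps power2_eq_square)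
    have sq: "0 \<le> (ut s x)^2 + (ux s x)^2 - 2 * \<rho> * ut s x * ux s x"
    proof -
      have "(ut s x)^2 + (ux s x)^2 - 2 * \<rho> * ut s x * ux s x = (ut s x - \<rho> * ux s x)^2 + (1 - \<rho>^2) * (ux s x)^2"
        by (simp add: algebra_simps power2_eq_square)
      moreover have "0 \<le> 1 - \<rho>^2" using rho by (simp add: abs_square_le_1)
      ultimately show ?thesis by simp
    qed
    have "0 \<le> V x * (u s x)^2" using V_pos[of x] by simp
    then have b: "0 \<le> (ut s x)^2 + (ux s x)^2 + V x * (u s x)^2 - 2 * \<rho> * ut s x * ux s x" using sq by linarith
    have "q * ((ut s x)^2 + (ux s x)^2 + V x * (u s x)^2 - 2 * \<rho> * ut s x * ux s x) \<le> 0"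
      using q b by (simp add: mult_nonpos_nonneg)
    moreover have "0 \<le> p * a x * (ut s x)^2" using p a_nn[of x] by simp
    ultimately show ?thesis unfolding G by linarith
  qed
  have inner: "integral {c..d} (\<lambda>x. Ad s x + Bd s x) \<le> 0" if s: "s \<in> {0..t}" for s
  proof -
    have "integral {c..d} (\<lambda>x. Ad s x + Bd s x) \<le> integral {c..d} (\<lambda>x. 0)"
      by (rule integral_le[OF I3[OF s] integrable_0]) (use Gle s in auto)
    then show ?thesis by simp
  qed
  have outer: "integral {0..t} (\<lambda>s. integral {c..d} (\<lambda>x. Ad s x + Bd s x)) \<le> 0"
  proof -
    have "integral {0..t} (\<lambda>s. integral {c..d} (\<lambda>x. Ad s x + Bd s x)) \<le> integral {0..t} (\<lambda>s. 0)"
      by (rule integral_le[OF I2 integrable_0]) (use inner in auto)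
    then show ?thesis by simp
  qed
  have A0: "Af 0 x = 0" for x
  proof (cases "0 \<le> sqrt ((x - x1)^2 + 1) + 0 - T")
    case True then show ?thesis unfolding Af_def by (simp add: psi_zero)
  next
    case False
    then have "\<bar>x - x1\<bar> < T" using rge[of x] by simp
    then have "R0 < \<bar>x\<bar>" using x1 by linarith
    then show ?thesis unfolding Af_def by (simp add: D0_zero)
  qed
  have "Af 0 = (\<lambda>x. 0)" using A0 by auto
  then have intA0: "integral {c..d} (Af 0) = 0" by simp
  have cAt: "continuous_on {c..d} (Af t)"
    unfolding Af_def D_def using t by (auto intro!: continuous_intros)
  have Atnn: "0 \<le> Af t x" for x unfolding Af_def by (simp add: psi_nonneg D_nonneg)
  have "integral {c..d} (Af t) \<le> 0" using I1 outer intA0 by linarith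
  moreover have "0 \<le> integral {c..d} (Af t)"
    by (rule integral_nonneg[OF integrable_continuous_real[OF cAt]]) (use Atnn in auto)
  ultimately have "integral {c..d} (Af t) = 0" by linarith
  then have hi: "(Af t has_integral 0) (cbox c d)"
    using integrable_continuous_real[OF cAt] by (simp add: has_integral_integrable_integral)
  have "Af t x1 = 0"
  proof (rule has_integral_0_cbox_imp_0[OF _ _ hi])
    show "continuous_on (cbox c d) (Af t)" using cAt by simp
    show "box c d \<noteq> {}" unfolding c_def d_def using T by simp
    show "x1 \<in> cbox c d" unfolding c_def d_def using T by simp
  qed (use Atnn in auto)
  moreover have "0 < psi (1 + t - T)" using t by (intro psi_pos) simp
  ultimately have "D t x1 = 0" unfolding Af_def by simp
  then have "(ut t x1)^2 \<le> 0" using D_ge[of t x1] by simp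
  then show ?thesis by simp
qed

lemma fp_ut:
  assumes t: "0 \<le> t" and x: "R0 + t + 1 < \<bar>x\<bar>"
  shows "ut t x = 0"
proof -
  define T' where "T' = (t + 1 + (\<bar>x\<bar> - R0)) / 2"
  have "0 < T'" unfolding T'_def using t x by (simp add: field_simps)
  moreover have "R0 + T' < \<bar>x\<bar>" unfolding T'_def using t x by (simp add: field_simps)
  moreover have "t < T' - 1" unfolding T'_def using t x by (simp add: field_simps)
  ultimately
  show ?thesis using fp_core t by blast
qed

lemma fp_u:
  assumes t: "0 \<le> t" and x: "R0 + t + 1 < \<bar>x\<bar>"
  shows "u t x = 0"
proof -
  have h1: "((\<lambda>s. ut s x) has_integral (u t x - u 0 x)) {0..t}"
    by (rule ftc_t[where f="\<lambda>s. u s x"]) (use t d_ut in auto)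
  have h2: "((\<lambda>s. ut s x) has_integral 0) {0..t}"
  proof -
    have "((\<lambda>s. 0::real) has_integral 0) {0..t}" by simp
    then show ?thesis
    proof (rule has_integral_eq[rotated])
      fix s assume "s \<in> {0..t}"
      then show "0 = ut s x" using x by (intro fp_ut[symmetric]) auto
    qed
  qed
  have "u t x - u 0 x = 0" by (rule has_integral_unique[OF h1 h2])
  then have "u t x = u 0 x" by simp
  also have "\<dots> = 0" using init_u[of x] supp0[of x] x R0 t by simp
  finally show ?thesis .
qed

lemma fp_ux:
  assumes t: "0 \<le> t" and x: "R0 + t + 1 < \<bar>x\<bar>"
  shows "ux t x = 0"
proof (rule zero_deriv_open[OF d_ux[OF t, of x], where S="{y. R0 + t + 1 < \<bar>y\<bar>}"])
  show "open {y::real. R0 + t + 1 < \<bar>y\<bar>}" by (intro open_Collect_less continuous_intros)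
qed (use x fp_u t in auto)

end

locale wave_T = wave +
  fixes T L :: real
  assumes T: "0 \<le> T" and L: "0 < L"
begin

definition dd where "dd = R0 + T + L + 4"

lemma dd_pos: "0 < dd" and dd_gt: "R0 + T + 1 < dd" "L + 2 < dd"
  unfolding dd_def using R0 T L by auto

lemma supp_T:
  assumes "0 \<le> t" "t \<le> T" "R0 + T + 1 < \<bar>x\<bar>"
  shows "u t x = 0" "ut t x = 0" "ux t x = 0"
  using assms fp_u fp_ut fp_ux by auto

lemma ends:
  assumes "t \<in> {0..T}"
  shows "u t dd = 0" "ut t dd = 0" "ux t dd = 0" "u t (-dd) = 0" "ut t (-dd) = 0" "ux t (-dd) = 0"
  using assms supp_T[of t dd] supp_T[of t "-dd"] dd_gt by auto

lemma energy_id: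
  assumes "0 \<le> S" "S \<le> t" "t \<le> T"
  shows "integral {-dd..dd} (D t) - integral {-dd..dd} (D S) =
           integral {S..t} (\<lambda>s. integral {-dd..dd} (\<lambda>x. -2 * a x * (ut s x)^2))"
    and "(\<lambda>s. integral {-dd..dd} (\<lambda>x. -2 * a x * (ut s x)^2)) integrable_on {S..t}"
proof -
  define Ad where "Ad s x = 2 * ut s x * utt s x + 2 * ux s x * utx s x + V x * (2 * u s x * ut s x)" for s x
  define Bf where "Bf s x = -2 * ut s x * ux s x" for s x
  define Bd where "Bd s x = -2 * (utx s x * ux s x + ut s x * uxx s x)" for s x
  have dA: "((\<lambda>s. D s x) has_real_derivative Ad s x) (at s within {0..})" if "s \<in> {S..t}" "x \<in> {-dd..dd}" for s x
  proof -
    have s0: "0 \<le> s" using that assms by auto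
    show ?thesis unfolding D_def Ad_def
      by (rule derivative_eq_intros d_ut d_utt d_uxt refl s0 | simp add: algebra_simps)+
  qed
  have dB: "((\<lambda>y. Bf s y) has_real_derivative Bd s x) (at x)" if "s \<in> {S..t}" "x \<in> {-dd..dd}" for s x
  proof -
    have s0: "0 \<le> s" using that assms by auto
    show ?thesis unfolding Bf_def Bd_def
      by (rule derivative_eq_intros d_ux d_utx d_uxx refl s0 | simp add: algebra_simps)+
  qed
  have cAd: "continuous_on ({S..t} \<times> {-dd..dd}) (\<lambda>p. Ad (fst p) (snd p))"
    unfolding Ad_def using assms by (auto intro!: continuous_intros)
  have cA0: "continuous_on {-dd..dd} (D S)"
    unfolding D_def using assms by (auto intro!: continuous_intros)
  have Bc: "Bf s (-dd) = 0" "Bf s dd = 0" if "s \<in> {S..t}" for s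
    unfolding Bf_def using ends[of s] that assms by auto
  have G: "-2 * a x * (ut s x)^2 = Ad s x + Bd s x" if "s \<in> {S..t}" "x \<in> {-dd..dd}" for s x
  proof -
    have s: "0 \<le> s" using that assms by auto
    have e: "utt s x = uxx s x - V x * u s x - a x * ut s x" using eq[OF s, of x] by simp
    show ?thesis unfolding Ad_def Bd_def e by (simp add: algebra_simps power2_eq_square)
  qed
  note DI = div_identity[where A=D and Ad=Ad and B=Bf and Bd=Bd and G="\<lambda>s x. -2 * a x * (ut s x)^2",
     OF assms(1,2) _ dA dB cAd cA0 Bc G]
  show "integral {-dd..dd} (D t) - integral {-dd..dd} (D S) =
           integral {S..t} (\<lambda>s. integral {-dd..dd} (\<lambda>x. -2 * a x * (ut s x)^2))"
    and "(\<lambda>s. integral {-dd..dd} (\<lambda>x. -2 * a x * (ut s x)^2)) integrable_on {S..t}"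
    using DI dd_pos by auto
qed

lemma equi_id:
  shows "integral {-dd..dd} (\<lambda>x. 2 * u T x * ut T x + a x * (u T x)^2) - integral {-dd..dd} (\<lambda>x. 2 * u 0 x * ut 0 x + a x * (u 0 x)^2) =
           integral {0..T} (\<lambda>s. integral {-dd..dd} (\<lambda>x. 2 * (ut s x)^2 - 2 * (ux s x)^2 - 2 * V x * (u s x)^2))"
proof -
  define Af where "Af s x = 2 * u s x * ut s x + a x * (u s x)^2" for s x
  define Ad where "Ad s x = 2 * ut s x * ut s x + 2 * u s x * utt s x + a x * (2 * u s x * ut s x)" for s x
  define Bf where "Bf s x = -2 * u s x * ux s x" for s x
  define Bd where "Bd s x = -2 * (ux s x * ux s x + u s x * uxx s x)" for s x
  have dA: "((\<lambda>s. Af s x) has_real_derivative Ad s x) (at s within {0..})" if "s \<in> {0..T}" "x \<in> {-dd..dd}" for s x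
  proof -
    have s0: "0 \<le> s" using that by auto
    show ?thesis unfolding Af_def Ad_def
      by (rule derivative_eq_intros d_ut d_utt refl s0 | simp add: algebra_simps)+
  qed
  have dB: "((\<lambda>y. Bf s y) has_real_derivative Bd s x) (at x)" if "s \<in> {0..T}" "x \<in> {-dd..dd}" for s x
  proof -
    have s0: "0 \<le> s" using that by auto
    show ?thesis unfolding Bf_def Bd_def
      by (rule derivative_eq_intros d_ux d_uxx refl s0 | simp add: algebra_simps)+
  qed
  have cAd: "continuous_on ({0..T} \<times> {-dd..dd}) (\<lambda>p. Ad (fst p) (snd p))"
    unfolding Ad_def by (auto intro!: continuous_intros)
  have cA0: "continuous_on {-dd..dd} (Af 0)"
    unfolding Af_def by (auto intro!: continuous_intros)
  have Bc: "Bf s (-dd) = 0" "Bf s dd = 0" if "s \<in> {0..T}" for s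
    unfolding Bf_def using ends[of s] that by auto
  have G: "2 * (ut s x)^2 - 2 * (ux s x)^2 - 2 * V x * (u s x)^2 = Ad s x + Bd s x" if "s \<in> {0..T}" "x \<in> {-dd..dd}" for s x
  proof -
    have s: "0 \<le> s" using that by auto
    have e: "utt s x = uxx s x - V x * u s x - a x * ut s x" using eq[OF s, of x] by simp
    show ?thesis unfolding Ad_def Bd_def e by (simp add: algebra_simps power2_eq_square)
  qed
  have T0: "0 \<le> (0::real)" by simp
  note DI = div_identity[where A=Af and Ad=Ad and B=Bf and Bd=Bd and G="\<lambda>s x. 2 * (ut s x)^2 - 2 * (ux s x)^2 - 2 * V x * (u s x)^2",
     OF T0 T _ dA dB cAd cA0 Bc G]
  show ?thesis
    using DI dd_pos unfolding Af_def by auto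
qed

definition m :: "real \<Rightarrow> real" where "m x = L * arctan (x / L)"
definition mp :: "real \<Rightarrow> real" where "mp x = 1 / (1 + (x / L)^2)"

lemma dm: "(m has_real_derivative mp x) (at x)"
proof -
  have "1 + (x / L)^2 \<noteq> 0" by (smt (verit) zero_le_power2)
  then show ?thesis unfolding m_def mp_def using L
    apply -
    apply (rule derivative_eq_intros refl)+
    apply simp
    apply (rule refl)
    apply (rule refl)
    apply (simp add: power2_eq_square inverse_eq_divide)
    done
qed

lemma m_cont: "continuous_on UNIV m"
  by (rule DERIV_continuous_on) (use dm in blast)

lemma mp_cont: "continuous_on UNIV mp"
proof -
  have "\<And>x. 1 + (x / L)^2 \<noteq> 0" by (smt (verit) zero_le_power2)
  then show ?thesis unfolding mp_def using L by (intro continuous_intros) auto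
qed

lemmas cont_m[continuous_intros] = cont1[OF m_cont]
lemmas cont_mp[continuous_intros] = cont1[OF mp_cont]

lemma mult_id:
  shows "integral {-dd..dd} (\<lambda>x. 2 * m x * ut T x * ux T x) - integral {-dd..dd} (\<lambda>x. 2 * m x * ut 0 x * ux 0 x) =
           integral {0..T} (\<lambda>s. integral {-dd..dd} (\<lambda>x. - mp x * ((ut s x)^2 + (ux s x)^2)
              + (mp x * V x + m x * deriv V x) * (u s x)^2 - 2 * a x * m x * ut s x * ux s x))"
proof -
  define Af where "Af s x = 2 * m x * ut s x * ux s x" for s x
  define Ad where "Ad s x = 2 * m x * (utt s x * ux s x + ut s x * utx s x)" for s x
  define Bf where "Bf s x = - m x * ((ut s x)^2 + (ux s x)^2) + m x * V x * (u s x)^2" for s x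
  define Bd where "Bd s x = - mp x * ((ut s x)^2 + (ux s x)^2) - m x * (2 * ut s x * utx s x + 2 * ux s x * uxx s x)
     + (mp x * V x + m x * deriv V x) * (u s x)^2 + m x * V x * (2 * u s x * ux s x)" for s x
  have dA: "((\<lambda>s. Af s x) has_real_derivative Ad s x) (at s within {0..})" if "s \<in> {0..T}" "x \<in> {-dd..dd}" for s x
  proof -
    have s0: "0 \<le> s" using that by auto
    show ?thesis unfolding Af_def Ad_def
      by (rule derivative_eq_intros d_ut d_utt d_uxt refl s0 | simp add: algebra_simps)+
  qed
  have dB: "((\<lambda>y. Bf s y) has_real_derivative Bd s x) (at x)" if "s \<in> {0..T}" "x \<in> {-dd..dd}" for s x
  proof -
    have s0: "0 \<le> s" using that by auto
    show ?thesis unfolding Bf_def Bd_def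
      apply (rule derivative_eq_intros dm V_deriv d_ux d_utx d_uxx refl s0)+
      apply (simp add: algebra_simps power2_eq_square)
      done
  qed
  have cAd: "continuous_on ({0..T} \<times> {-dd..dd}) (\<lambda>p. Ad (fst p) (snd p))"
    unfolding Ad_def by (auto intro!: continuous_intros)
  have cA0: "continuous_on {-dd..dd} (Af 0)"
    unfolding Af_def by (auto intro!: continuous_intros)
  have Bc: "Bf s (-dd) = 0" "Bf s dd = 0" if "s \<in> {0..T}" for s
    unfolding Bf_def using ends[of s] that by auto
  have G: "- mp x * ((ut s x)^2 + (ux s x)^2)
              + (mp x * V x + m x * deriv V x) * (u s x)^2 - 2 * a x * m x * ut s x * ux s x = Ad s x + Bd s x"
    if "s \<in> {0..T}" "x \<in> {-dd..dd}" for s x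
  proof -
    have s: "0 \<le> s" using that by auto
    have e: "utt s x = uxx s x - V x * u s x - a x * ut s x" using eq[OF s, of x] by simp
    show ?thesis unfolding Ad_def Bd_def e by (simp add: algebra_simps power2_eq_square)
  qed
  have T0: "0 \<le> (0::real)" by simp
  note DI = div_identity[where A=Af and Ad=Ad and B=Bf and Bd=Bd,
     OF T0 T _ dA dB cAd cA0 Bc G]
  show ?thesis
    using DI dd_pos unfolding Af_def by auto
qed

definition W where "W t x = integral {0..t} (\<lambda>s. u s x)"
definition Wx where "Wx t x = integral {0..t} (\<lambda>s. ux s x)"
definition f where "f x = u1 x + a x * u0 x"
definition Z where "Z t x = ut t x - u1 x + V x * W t x + a x * (u t x - u0 x)"

lemma W0: "W 0 x = 0" "Wx 0 x = 0" unfolding W_def Wx_def by auto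

lemma prim_deriv:
  fixes h :: "real \<Rightarrow> real"
  assumes t: "0 \<le> t" and c: "continuous_on {0..} h"
  shows "((\<lambda>s. integral {0..s} h) has_real_derivative h t) (at t within {0..})"
proof -
  have "((\<lambda>s. integral {0..s} h) has_real_derivative h t) (at t within {0..t+1})"
    by (rule integral_has_real_derivative) (use t c in \<open>auto intro: continuous_on_subset\<close>)
  then show ?thesis by (rule deriv_within_extend) (use t in auto)
qed

lemma dW_t: "0 \<le> t \<Longrightarrow> ((\<lambda>s. W s x) has_real_derivative u t x) (at t within {0..})"
  unfolding W_def by (rule prim_deriv) (auto intro!: continuous_intros)

lemma dWx_t: "0 \<le> t \<Longrightarrow> ((\<lambda>s. Wx s x) has_real_derivative ux t x) (at t within {0..})"
  unfolding Wx_def by (rule prim_deriv) (auto intro!: continuous_intros)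

lemma dWx_x:
  assumes t: "0 \<le> t"
  shows "((\<lambda>y. Wx t y) has_real_derivative Z t x) (at x)"
proof -
  have L1: "((\<lambda>y. integral (cbox 0 t) (\<lambda>s. ux s y)) has_field_derivative integral (cbox 0 t) (\<lambda>s. uxx s x)) (at x within UNIV)"
  proof (rule leibniz_rule_field_derivative)
    show "((\<lambda>y. ux s y) has_field_derivative uxx s y) (at y within UNIV)" if "s \<in> cbox 0 t" for y s
      using that d_uxx by auto
    show "(\<lambda>s. ux s y) integrable_on cbox 0 t" for y
      by (simp, rule integrable_continuous_real) (auto intro!: continuous_intros)
    have "continuous_on (UNIV \<times> cbox 0 t) (\<lambda>p. uxx (snd p) (fst p))"
      by (auto intro!: continuous_intros)
    then show "continuous_on (UNIV \<times> cbox 0 t) (\<lambda>(y, s). uxx s y)"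
      by (simp add: case_prod_beta)
  qed auto
  have I1: "((\<lambda>s. utt s x) has_integral (ut t x - ut 0 x)) {0..t}"
    by (rule ftc_t[where f="\<lambda>s. ut s x"]) (use t d_utt in auto)
  have I2: "((\<lambda>s. u s x) has_integral W t x) {0..t}"
    unfolding W_def by (rule integrable_integral, rule integrable_continuous_real) (auto intro!: continuous_intros)
  have I3: "((\<lambda>s. ut s x) has_integral (u t x - u 0 x)) {0..t}"
    by (rule ftc_t[where f="\<lambda>s. u s x"]) (use t d_ut in auto)
  have "((\<lambda>s. utt s x + V x * u s x + a x * ut s x) has_integral
          ((ut t x - ut 0 x) + V x * W t x + a x * (u t x - u 0 x))) {0..t}"
    by (intro has_integral_add has_integral_mult_right I1 I2 I3)
  moreover have "\<And>s. s \<in> {0..t} \<Longrightarrow> utt s x + V x * u s x + a x * ut s x = uxx s x"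
    using eq by (auto simp: algebra_simps)
  ultimately have "((\<lambda>s. uxx s x) has_integral Z t x) {0..t}"
    unfolding Z_def using has_integral_eq init_u init_ut by (smt (verit, best))
  then have "integral {0..t} (\<lambda>s. uxx s x) = Z t x" by (rule integral_unique)
  then show ?thesis using L1 unfolding Wx_def by simp
qed

lemma cont_W0: "continuous_on ({0..T} \<times> UNIV) (\<lambda>p. W (fst p) (snd p))"
  unfolding W_def by (rule cont_prim) (auto intro!: continuous_intros)

lemma cont_Wx0: "continuous_on ({0..T} \<times> UNIV) (\<lambda>p. Wx (fst p) (snd p))"
  unfolding Wx_def by (rule cont_prim) (auto intro!: continuous_intros)

lemma contT:
  fixes w :: "real \<Rightarrow> real \<Rightarrow> real" and S :: "'a::topological_space set"
  assumes cw: "continuous_on ({0..T} \<times> UNIV) (\<lambda>p. w (fst p) (snd p))"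
  shows "continuous_on S g1 \<Longrightarrow> continuous_on S g2 \<Longrightarrow> (\<And>s. s \<in> S \<Longrightarrow> g1 s \<in> {0..T}) \<Longrightarrow> continuous_on S (\<lambda>s. w (g1 s) (g2 s))"
proof -
  assume f: "continuous_on S g1" and g: "continuous_on S g2" and nn: "\<And>s. s \<in> S \<Longrightarrow> g1 s \<in> {0..T}"
  have "continuous_on S (\<lambda>s. (\<lambda>p. w (fst p) (snd p)) ((\<lambda>s. (g1 s, g2 s)) s))"
    by (rule continuous_on_compose2[OF cw]) (use f g nn in \<open>auto intro!: continuous_intros\<close>)
  then show ?thesis by simp
qed

lemmas cont_W[continuous_intros] = contT[OF cont_W0]
lemmas cont_Wx[continuous_intros] = contT[OF cont_Wx0]

lemma f_cont[continuous_intros]: "continuous_on S g \<Longrightarrow> continuous_on S (\<lambda>s. f (g s))"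
  unfolding f_def by (auto intro!: continuous_intros)

lemma W_id:
  shows "integral {-dd..dd} (\<lambda>x. (u T x)^2 + (Wx T x)^2 + V x * (W T x)^2 - 2 * f x * W T x)
         - integral {-dd..dd} (\<lambda>x. (u0 x)^2) =
           integral {0..T} (\<lambda>s. integral {-dd..dd} (\<lambda>x. -2 * a x * (u s x)^2))"
    and "(\<lambda>s. integral {-dd..dd} (\<lambda>x. -2 * a x * (u s x)^2)) integrable_on {0..T}"
proof -
  define Af where "Af s x = (u s x)^2 + (Wx s x)^2 + V x * (W s x)^2 - 2 * f x * W s x" for s x
  define Ad where "Ad s x = 2 * u s x * ut s x + 2 * Wx s x * ux s x + V x * (2 * W s x * u s x) - 2 * f x * u s x" for s x
  define Bf where "Bf s x = -2 * u s x * Wx s x" for s x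
  define Bd where "Bd s x = -2 * (ux s x * Wx s x + u s x * Z s x)" for s x
  have dA: "((\<lambda>s. Af s x) has_real_derivative Ad s x) (at s within {0..})" if "s \<in> {0..T}" "x \<in> {-dd..dd}" for s x
  proof -
    have s0: "0 \<le> s" using that by auto
    show ?thesis unfolding Af_def Ad_def
      by (rule derivative_eq_intros d_ut dW_t dWx_t refl s0 | simp add: algebra_simps)+
  qed
  have dB: "((\<lambda>y. Bf s y) has_real_derivative Bd s x) (at x)" if "s \<in> {0..T}" "x \<in> {-dd..dd}" for s x
  proof -
    have s0: "0 \<le> s" using that by auto
    show ?thesis unfolding Bf_def Bd_def
      by (rule derivative_eq_intros d_ux dWx_x refl s0 | simp add: algebra_simps)+
  qed
  have cAd: "continuous_on ({0..T} \<times> {-dd..dd}) (\<lambda>p. Ad (fst p) (snd p))"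
    unfolding Ad_def by (auto intro!: continuous_intros)
  have cA0: "continuous_on {-dd..dd} (Af 0)"
    unfolding Af_def using T by (auto intro!: continuous_intros)
  have Bc: "Bf s (-dd) = 0" "Bf s dd = 0" if "s \<in> {0..T}" for s
    unfolding Bf_def using ends[of s] that by auto
  have G: "-2 * a x * (u s x)^2 = Ad s x + Bd s x" if "s \<in> {0..T}" "x \<in> {-dd..dd}" for s x
    unfolding Ad_def Bd_def Z_def f_def by (simp add: algebra_simps power2_eq_square)
  have T0: "0 \<le> (0::real)" by simp
  note DI = div_identity[where A=Af and Ad=Ad and B=Bf and Bd=Bd and G="\<lambda>s x. -2 * a x * (u s x)^2",
     OF T0 T _ dA dB cAd cA0 Bc G]
  have A0: "Af 0 = (\<lambda>x. (u0 x)^2)" unfolding Af_def by (auto simp: W0 init_u)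
  show "integral {-dd..dd} (\<lambda>x. (u T x)^2 + (Wx T x)^2 + V x * (W T x)^2 - 2 * f x * W T x)
         - integral {-dd..dd} (\<lambda>x. (u0 x)^2) =
           integral {0..T} (\<lambda>s. integral {-dd..dd} (\<lambda>x. -2 * a x * (u s x)^2))"
    and "(\<lambda>s. integral {-dd..dd} (\<lambda>x. -2 * a x * (u s x)^2)) integrable_on {0..T}"
    using DI dd_pos unfolding A0[symmetric] unfolding Af_def by auto
qed

end

lemma cs_int:
  fixes h :: "real \<Rightarrow> real"
  assumes xy: "x \<le> y" and c: "continuous_on {x..y} h"
  shows "(integral {x..y} h)^2 \<le> (y - x) * integral {x..y} (\<lambda>s. (h s)^2)"
proof (cases "x = y")
  case True then show ?thesis by simp
next
  case False
  then have l: "0 < y - x" using xy by simp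
  define I where "I = integral {x..y} h"
  define J where "J = integral {x..y} (\<lambda>s. (h s)^2)"
  define k where "k = I / (y - x)"
  have hI: "(h has_integral I) {x..y}" unfolding I_def
    by (rule integrable_integral, rule integrable_continuous_real[OF c])
  have hJ: "((\<lambda>s. (h s)^2) has_integral J) {x..y}" unfolding J_def
    by (rule integrable_integral, rule integrable_continuous_real) (use c in \<open>auto intro!: continuous_intros\<close>)
  have "((\<lambda>s. (h s)^2 - 2 * k * h s + k^2) has_integral (J - 2 * k * I + (y - x) * k^2)) {x..y}"
    using has_integral_add[OF has_integral_diff[OF hJ has_integral_mult_right[OF hI, of "2 * k"]] has_integral_const_real[of "k^2" x y]] xy
    by simp
  then have "0 \<le> J - 2 * k * I + (y - x) * k^2"
  proof (rule has_integral_nonneg)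
    fix s
    have "(h s)^2 - 2 * k * h s + k^2 = (h s - k)^2" by (simp add: power2_eq_square algebra_simps)
    then show "0 \<le> (h s)^2 - 2 * k * h s + k^2" by simp
  qed
  moreover have kd: "k * (y - x) = I" using l by (simp add: k_def)
  ultimately have "0 \<le> J - k * I" by (simp add: power2_eq_square algebra_simps flip: kd)
  then have "0 \<le> (J - k * I) * (y - x)" using l by simp
  then have "I^2 \<le> J * (y - x)" using kd by (simp add: power2_eq_square algebra_simps flip: kd)
  then show ?thesis unfolding I_def J_def by (simp add: algebra_simps)
qed

lemma poinc:
  fixes g g' \<rho> :: "real \<Rightarrow> real" and L c d :: real
  assumes L: "0 < L" and cd: "c \<le> -(L+1)" "L + 2 \<le> d"
    and dg: "\<And>x. (g has_real_derivative g' x) (at x)"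
    and cg': "continuous_on {c..d} g'"
    and c\<rho>: "continuous_on {c..d} \<rho>" and \<rho>0: "\<And>x. 0 \<le> \<rho> x" and \<rho>1: "\<And>x. \<rho> x \<le> 1"
    and \<rho>z: "\<And>x. L + 1 \<le> \<bar>x\<bar> \<Longrightarrow> \<rho> x = 0"
  shows "integral {c..d} (\<lambda>x. \<rho> x * (g x)^2) \<le> 4*(L+1)*(2*L+3) * integral {c..d} (\<lambda>x. (g' x)^2)
           + 4*(L+1) * integral {L+1..L+2} (\<lambda>x. (g x)^2)"
proof -
  define Q where "Q = integral {c..d} (\<lambda>x. (g' x)^2)"
  define P1 where "P1 = integral {L+1..L+2} (\<lambda>x. (g x)^2)"
  define K where "K = 2 * P1 + 2 * (2*L+3) * Q"
  have cg: "continuous_on UNIV g"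
    by (rule DERIV_continuous_on) (use dg in blast)
  have cg2: "continuous_on S (\<lambda>x. (g x)^2)" for S
    using cg by (auto intro!: continuous_intros intro: continuous_on_subset)
  have Qnn: "0 \<le> Q" unfolding Q_def
    by (rule integral_nonneg, rule integrable_continuous_real) (use cg' in \<open>auto intro!: continuous_intros\<close>)
  have P1nn: "0 \<le> P1" unfolding P1_def
    by (rule integral_nonneg, rule integrable_continuous_real[OF cg2]) auto
  have step1: "(g x)^2 \<le> 2 * (g y)^2 + 2 * (2*L+3) * Q" if x: "x \<in> {-(L+1)..L+1}" and y: "y \<in> {L+1..L+2}" for x y
  proof -
    have xy: "x \<le> y" using x y by auto
    have sub: "{x..y} \<subseteq> {c..d}" using x y cd by auto
    have cg'xy: "continuous_on {x..y} g'" using continuous_on_subset[OF cg' sub] .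
    have "(g' has_integral (g y - g x)) {x..y}"
      by (rule ftc_x[OF xy]) (use dg in auto)
    then have gi: "integral {x..y} g' = g y - g x" by (rule integral_unique)
    have "(g y - g x)^2 \<le> (y - x) * integral {x..y} (\<lambda>s. (g' s)^2)"
      using cs_int[OF xy cg'xy] gi by simp
    also have "\<dots> \<le> (2*L+3) * Q"
    proof (rule mult_mono)
      show "y - x \<le> 2*L+3" using x y by auto
      show "integral {x..y} (\<lambda>s. (g' s)^2) \<le> Q" unfolding Q_def
        by (rule integral_subset_le[OF sub]) (use cg' cg'xy in \<open>auto intro!: integrable_continuous_real continuous_intros\<close>)
      show "0 \<le> 2*L+3" using L by simp
      show "0 \<le> integral {x..y} (\<lambda>s. (g' s)^2)"
        by (rule integral_nonneg) (use cg'xy in \<open>auto intro!: integrable_continuous_real continuous_intros\<close>)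
    qed
    finally have a: "(g y - g x)^2 \<le> (2*L+3) * Q" .
    have "(g x)^2 \<le> 2 * (g y)^2 + 2 * (g y - g x)^2"
    proof -
      have "2 * (g y)^2 + 2 * (g y - g x)^2 - (g x)^2 = (2 * g y - g x)^2" by (simp add: power2_eq_square algebra_simps)
      then show ?thesis by (smt (verit) zero_le_power2)
    qed
    then show ?thesis using a by linarith
  qed
  have step2: "(g x)^2 \<le> K" if x: "x \<in> {-(L+1)..L+1}" for x
  proof -
    have "integral {L+1..L+2} (\<lambda>y. (g x)^2) \<le> integral {L+1..L+2} (\<lambda>y. 2 * (g y)^2 + 2 * (2*L+3) * Q)"
      by (rule integral_le) (use step1[OF x] cg2 cg in \<open>auto intro!: integrable_continuous_real continuous_intros intro: continuous_on_subset\<close>)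
    also have "\<dots> = 2 * P1 + 2 * (2*L+3) * Q"
    proof -
      have "integral {L+1..L+2} (\<lambda>y. 2 * (g y)^2 + 2 * (2*L+3) * Q) =
          integral {L+1..L+2} (\<lambda>y. 2 * (g y)^2) + integral {L+1..L+2} (\<lambda>y. 2 * (2*L+3) * Q)"
        by (rule integral_add) (use cg2 cg in \<open>auto intro!: integrable_continuous_real continuous_intros intro: continuous_on_subset\<close>)
      then show ?thesis unfolding P1_def by simp
    qed
    finally show ?thesis unfolding K_def by simp
  qed
  have step3: "\<rho> x * (g x)^2 \<le> K * \<rho> x" if "x \<in> {c..d}" for x
  proof (cases "L + 1 \<le> \<bar>x\<bar>")
    case True then show ?thesis using \<rho>z by simp
  next
    case False
    then have "x \<in> {-(L+1)..L+1}" by auto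
    then have "(g x)^2 \<le> K" by (rule step2)
    then have "\<rho> x * (g x)^2 \<le> \<rho> x * K" using \<rho>0[of x] by (rule mult_left_mono)
    then show ?thesis by (simp add: mult.commute)
  qed
  have "integral {c..d} (\<lambda>x. \<rho> x * (g x)^2) \<le> integral {c..d} (\<lambda>x. K * \<rho> x)"
    by (rule integral_le) (use step3 c\<rho> cg2 cg in \<open>auto intro!: integrable_continuous_real continuous_intros intro: continuous_on_subset\<close>)
  also have "\<dots> = K * integral {c..d} \<rho>" by simp
  also have "integral {c..d} \<rho> \<le> 2 * (L + 1)"
  proof -
    have "integral {c..d} \<rho> = integral {c..d} (\<lambda>x. if x \<in> {-(L+1)..L+1} then \<rho> x else 0)"
      by (rule integral_cong) (use \<rho>z in auto)
    also have "\<dots> = integral ({-(L+1)..L+1} \<inter> {c..d}) \<rho>"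
      by (rule Henstock_Kurzweil_Integration.integral_restrict_Int)
    also have "{-(L+1)..L+1} \<inter> {c..d} = {-(L+1)..L+1}" using cd by auto
    also have "integral {-(L+1)..L+1} \<rho> \<le> integral {-(L+1)..L+1} (\<lambda>x. 1)"
      by (rule integral_le) (use c\<rho> cd \<rho>1 in \<open>auto intro!: integrable_continuous_real intro: continuous_on_subset\<close>)
    also have "\<dots> = 2 * (L + 1)" using L by simp
    finally show ?thesis .
  qed
  then have "K * integral {c..d} \<rho> \<le> K * (2 * (L + 1))"
    by (rule mult_left_mono) (use P1nn Qnn L in \<open>simp add: K_def\<close>)
  finally show ?thesis unfolding K_def Q_def[symmetric] P1_def[symmetric] by (simp add: algebra_simps)
qed

context wave_T begin

definition II :: "(real \<Rightarrow> real \<Rightarrow> real) \<Rightarrow> real" where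
  "II g = integral {0..T} (\<lambda>s. integral {-dd..dd} (g s))"

abbreviation CB :: "(real \<Rightarrow> real \<Rightarrow> real) \<Rightarrow> bool" where "CB g \<equiv> continuous_on ({0..T} \<times> {-dd..dd}) (\<lambda>p. g (fst p) (snd p))"

lemma II_int_in: assumes "CB g" "s \<in> {0..T}" shows "g s integrable_on {-dd..dd}"
proof -
  have "continuous_on {-dd..dd} (g s)" by (rule cont_slice_t[OF assms])
  then show ?thesis by (rule integrable_continuous_real)
qed

lemma II_int_out: assumes "CB g" shows "(\<lambda>s. integral {-dd..dd} (g s)) integrable_on {0..T}"
proof -
  have "continuous_on {0..T} (\<lambda>s. integral {-dd..dd} (g s))" by (rule param_cont_t[OF assms])
  then show ?thesis by (rule integrable_continuous_real)
qed

lemma II_add: assumes "CB g" "CB h" shows "II (\<lambda>s x. g s x + h s x) = II g + II h"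
proof -
  have "II (\<lambda>s x. g s x + h s x) = integral {0..T} (\<lambda>s. integral {-dd..dd} (g s) + integral {-dd..dd} (h s))"
    unfolding II_def by (rule integral_cong, rule integral_add) (use assms II_int_in in auto)
  also have "\<dots> = II g + II h"
    unfolding II_def by (rule integral_add) (use assms II_int_out in auto)
  finally show ?thesis .
qed

lemma II_cmul: "II (\<lambda>s x. k * g s x) = k * II g"
  unfolding II_def by simp

lemma II_mono: assumes "CB g" "CB h" "\<And>s x. s \<in> {0..T} \<Longrightarrow> x \<in> {-dd..dd} \<Longrightarrow> g s x \<le> h s x"
  shows "II g \<le> II h"
  unfolding II_def
proof (rule integral_le)
  show "(\<lambda>s. integral {-dd..dd} (g s)) integrable_on {0..T}" "(\<lambda>s. integral {-dd..dd} (h s)) integrable_on {0..T}"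
    using assms II_int_out by auto
  show "integral {-dd..dd} (g s) \<le> integral {-dd..dd} (h s)" if "s \<in> {0..T}" for s
    by (rule integral_le) (use assms that II_int_in in auto)
qed

lemma II_nonneg: assumes "CB g" "\<And>s x. s \<in> {0..T} \<Longrightarrow> x \<in> {-dd..dd} \<Longrightarrow> 0 \<le> g s x"
  shows "0 \<le> II g"
proof -
  have "II (\<lambda>s x. 0) \<le> II g" by (rule II_mono) (use assms in \<open>auto intro!: continuous_intros\<close>)
  then show ?thesis by (simp add: II_def)
qed

lemma II_eq: assumes "\<And>s x. s \<in> {0..T} \<Longrightarrow> x \<in> {-dd..dd} \<Longrightarrow> g s x = h s x"
  shows "II g = II h"
  unfolding II_def by (rule integral_cong, rule integral_cong) (use assms in auto)

end

context wave begin

lemma V_mono1: assumes "0 \<le> x" "x \<le> y" shows "V y \<le> V x"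
proof (cases "x = y")
  case False
  then have xy: "x < y" using assms by simp
  from MVT2[OF xy, of V "deriv V"] V_deriv obtain z where z: "x < z" "z < y" "V y - V x = (y - x) * deriv V z"
    by blast
  have "deriv V z \<le> 0"
  proof -
    have "deriv V z * z \<le> 0" by (rule V'_sign)
    moreover have "0 < z" using z assms by simp
    ultimately show ?thesis by (simp add: mult_le_0_iff)
  qed
  then have "(y - x) * deriv V z \<le> 0" using xy by (simp add: mult_nonneg_nonpos)
  then show ?thesis using z by simp
qed simp

lemma V_mono2: assumes "y \<le> x" "x \<le> 0" shows "V y \<le> V x"
proof (cases "x = y")
  case False
  then have xy: "y < x" using assms by simp
  from MVT2[OF xy, of V "deriv V"] V_deriv obtain z where z: "y < z" "z < x" "V x - V y = (x - y) * deriv V z"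
    by blast
  have "0 \<le> deriv V z"
  proof -
    have "deriv V z * z \<le> 0" by (rule V'_sign)
    moreover have "z < 0" using z assms by simp
    ultimately show ?thesis by (simp add: mult_le_0_iff)
  qed
  then have "0 \<le> (x - y) * deriv V z" using xy by simp
  then show ?thesis using z by simp
qed simp

lemma V_le0: "V x \<le> V 0"
  by (cases "0 \<le> x") (auto intro: V_mono1 V_mono2)

lemma V_ne0[simp]: "V x \<noteq> 0" using V_pos[of x] by simp

end

context wave_T begin

lemma m_sign: "m x * deriv V x \<le> 0"
proof -
  consider "0 < x" | "x < 0" | "x = 0" by linarith
  then show ?thesis
  proof cases
    case 1
    have "deriv V x \<le> 0" using V'_sign[of x] 1 by (simp add: mult_le_0_iff)
    moreover have "0 < m x" unfolding m_def using 1 L by simp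
    ultimately show ?thesis by (simp add: mult_nonneg_nonpos)
  next
    case 2
    have "0 \<le> deriv V x" using V'_sign[of x] 2 by (simp add: mult_le_0_iff)
    moreover have "m x < 0" unfolding m_def using 2 L by (simp add: mult_pos_neg divide_neg_pos)
    ultimately show ?thesis by (simp add: mult_nonpos_nonneg)
  next
    case 3 then show ?thesis by (simp add: m_def)
  qed
qed

lemma m_bound: "\<bar>m x\<bar> \<le> L * pi / 2"
proof -
  have "\<bar>arctan (x / L)\<bar> \<le> pi / 2" using arctan_bounded[of "x/L"] by auto
  then have "L * \<bar>arctan (x / L)\<bar> \<le> L * (pi / 2)" using L by (simp add: mult_left_mono)
  then show ?thesis unfolding m_def using L by (simp add: abs_mult)
qed

lemma mp_pos: "0 < mp x" and mp_le1: "mp x \<le> 1"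
proof -
  have "0 < 1 + (x / L)^2" by (smt (verit) zero_le_power2)
  then show "0 < mp x" unfolding mp_def by simp
  have "1 \<le> 1 + (x / L)^2" by simp
  then show "mp x \<le> 1" unfolding mp_def using \<open>0 < 1 + (x / L)^2\<close> by (simp add: divide_le_eq_1)
qed

lemma mp_half: assumes "\<bar>x\<bar> \<le> L" shows "1/2 \<le> mp x"
proof -
  have "\<bar>x / L\<bar> \<le> 1" using assms L by (simp add: abs_divide)
  then have "(x / L)^2 \<le> 1" by (simp add: abs_square_le_1)
  then have "1 + (x / L)^2 \<le> 2" by simp
  moreover have "0 < 1 + (x / L)^2" by (smt (verit) zero_le_power2)
  ultimately show ?thesis unfolding mp_def by (simp add: field_simps)
qed

definition \<rho> :: "real \<Rightarrow> real" where "\<rho> x = max 0 (min 1 (L + 1 - \<bar>x\<bar>))"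

lemma \<rho>_cont: "continuous_on UNIV \<rho>" unfolding \<rho>_def by (intro continuous_intros)
lemmas cont_\<rho>[continuous_intros] = cont1[OF \<rho>_cont]

lemma \<rho>_props: "0 \<le> \<rho> x" "\<rho> x \<le> 1" "L + 1 \<le> \<bar>x\<bar> \<Longrightarrow> \<rho> x = 0" "\<bar>x\<bar> \<le> L \<Longrightarrow> \<rho> x = 1"
  unfolding \<rho>_def by auto

end

locale wave_E = wave_T +
  fixes \<epsilon>1 :: real
  assumes eps: "0 < \<epsilon>1" and a_eps: "\<And>x. L \<le> \<bar>x\<bar> \<Longrightarrow> \<epsilon>1 \<le> a x"
    and V0small: "4 * V 0 * (4*(L+1)*(2*L+3)) < 1"
begin

definition Cst where "Cst = 4*(L+1)*(2*L+3)"
definition \<eta> where "\<eta> = (1 - 4 * V 0 * Cst) / 8"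
definition MM where "MM = L * pi / 2"
definition c1 where "c1 = 4 * A * MM^2 / \<eta> + 2 / \<epsilon>1"
definition c2 where "c2 = 4 * Vm / \<epsilon>1"
definition GP where "GP s x = 2*(ut s x)^2 - 2*(ux s x)^2 - 2*V x*(u s x)^2" for s x
definition GM where "GM s x = - mp x * ((ut s x)^2 + (ux s x)^2) + (mp x * V x + m x * deriv V x) * (u s x)^2
     - 2 * a x * m x * ut s x * ux s x" for s x

lemma eta_pos: "0 < \<eta>" unfolding \<eta>_def using V0small by (simp add: Cst_def)
lemma A_nn: "0 \<le> A" using a_nn[of 0] a_le[of 0] by simp
lemma Vm_nn: "0 \<le> Vm" using V_pos[of 0] V_le[of 0] by simp

lemma PW: "D s x \<le> -(1/2) * GP s x - 4 * GM s x + 4 * V 0 * \<rho> x * (u s x)^2 + c2 * a x * (u s x)^2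
             + 4 * \<eta> * (ux s x)^2 + c1 * a x * (ut s x)^2"
proof -
  define U where "U = u s x"
  define Ut where "Ut = ut s x"
  define Ux where "Ux = ux s x"
  have ep: "0 < \<epsilon>1" by (rule eps)
  have aa: "0 \<le> a x" "a x \<le> A" using a_nn a_le by auto
  have b1: "0 \<le> 4 * mp x * Ut^2 + (2 / \<epsilon>1) * a x * Ut^2 - 2 * Ut^2"
  proof (cases "\<bar>x\<bar> \<le> L")
    case True
    then have "1/2 \<le> mp x" by (rule mp_half)
    then have "2 * Ut^2 \<le> 4 * mp x * Ut^2"
      using mult_right_mono[of "1/2" "mp x" "Ut^2"] by simp
    moreover have "0 \<le> (2 / \<epsilon>1) * a x * Ut^2" using ep aa by simp
    ultimately show ?thesis by linarith
  next
    case False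
    then have "\<epsilon>1 \<le> a x" using a_eps by simp
    then have "1 \<le> a x / \<epsilon>1" using ep by simp
    then have "2 * Ut^2 \<le> (2 / \<epsilon>1) * a x * Ut^2"
      using mult_right_mono[of 1 "a x / \<epsilon>1" "2 * Ut^2"] by (simp add: algebra_simps)
    moreover have "0 \<le> 4 * mp x * Ut^2" using mp_pos[of x] by simp
    ultimately show ?thesis by linarith
  qed
  have b2: "0 \<le> 4 * mp x * Ux^2" using mp_pos[of x] by simp
  have b3: "0 \<le> 4 * (V x - mp x * V x) * U^2"
  proof -
    have "mp x * V x \<le> 1 * V x" using mp_le1[of x] V_pos[of x] by (intro mult_right_mono) auto
    then show ?thesis by simp
  qed
  have b4: "0 \<le> - 4 * (m x * deriv V x) * U^2"
  proof -
    have "(m x * deriv V x) * U^2 \<le> 0" using m_sign[of x] by (rule mult_nonpos_nonneg) simp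
    then show ?thesis by linarith
  qed
  have b5: "0 \<le> 8 * a x * m x * Ut * Ux + 4 * \<eta> * Ux^2 + (4 * A * MM^2 / \<eta>) * a x * Ut^2"
  proof -
    define p where "p = a x * m x * Ut"
    have et: "0 < \<eta>" by (rule eta_pos)
    have "0 \<le> (\<eta> * Ux + p)^2 / \<eta>" using et by simp
    also have "(\<eta> * Ux + p)^2 / \<eta> = \<eta> * Ux^2 + 2 * p * Ux + p^2 / \<eta>"
      using et by (simp add: power2_eq_square field_simps)
    finally have q1: "0 \<le> \<eta> * Ux^2 + 2 * p * Ux + p^2 / \<eta>" .
    have "p^2 = (a x)^2 * (m x)^2 * Ut^2" unfolding p_def by (simp add: power_mult_distrib)
    also have "\<dots> \<le> (A * a x) * MM^2 * Ut^2"
    proof (intro mult_right_mono mult_mono)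
      show "(a x)^2 \<le> A * a x" using aa by (simp add: power2_eq_square mult_right_mono)
      have "\<bar>m x\<bar> \<le> MM" using m_bound[of x] by (simp add: MM_def)
      then show "(m x)^2 \<le> MM^2" by (metis abs_le_square_iff abs_of_nonneg abs_ge_zero order_trans)
      show "0 \<le> A * a x" using aa A_nn by simp
      show "0 \<le> (m x)^2" by simp
    qed simp
    finally have "p^2 / \<eta> \<le> (A * a x * MM^2 * Ut^2) / \<eta>" using et by (simp add: divide_right_mono)
    also have "\<dots> = (A * MM^2 / \<eta>) * a x * Ut^2" by simp
    finally have q2: "p^2 / \<eta> \<le> (A * MM^2 / \<eta>) * a x * Ut^2" .
    have "8 * a x * m x * Ut * Ux = 4 * (2 * p * Ux)" unfolding p_def by simp
    moreover have "(4 * A * MM^2 / \<eta>) * a x * Ut^2 = 4 * ((A * MM^2 / \<eta>) * a x * Ut^2)" by simp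
    ultimately show ?thesis using q1 q2 by linarith
  qed
  have b6: "0 \<le> 4 * V 0 * \<rho> x * U^2 + c2 * a x * U^2 - 4 * V x * U^2"
  proof (cases "\<bar>x\<bar> \<le> L")
    case True
    then have "\<rho> x = 1" by (simp add: \<rho>_props)
    moreover have "V x * U^2 \<le> V 0 * U^2" using V_le0[of x] by (simp add: mult_right_mono)
    moreover have "0 \<le> c2 * a x * U^2" unfolding c2_def using Vm_nn ep aa by simp
    ultimately show ?thesis by simp
  next
    case False
    then have ea: "\<epsilon>1 \<le> a x" using a_eps by simp
    have "4 * V x * U^2 \<le> 4 * Vm * U^2" using V_le[of x] by (simp add: mult_right_mono)
    also have "\<dots> \<le> c2 * a x * U^2"
    proof -
      have "1 \<le> a x / \<epsilon>1" using ea ep by simp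
      then have "4 * Vm * U^2 * 1 \<le> 4 * Vm * U^2 * (a x / \<epsilon>1)"
        using Vm_nn by (intro mult_left_mono) auto
      then show ?thesis unfolding c2_def by (simp add: mult_ac)
    qed
    finally have "4 * V x * U^2 \<le> c2 * a x * U^2" .
    moreover have "0 \<le> 4 * V 0 * \<rho> x * U^2" using V_pos[of 0] \<rho>_props(1)[of x] by simp
    ultimately show ?thesis by linarith
  qed
  have id: "-(1/2) * GP s x - 4 * GM s x + 4 * V 0 * \<rho> x * (u s x)^2 + c2 * a x * (u s x)^2
             + 4 * \<eta> * (ux s x)^2 + c1 * a x * (ut s x)^2 - D s x =
      (4 * mp x * Ut^2 + (2 / \<epsilon>1) * a x * Ut^2 - 2 * Ut^2) + 4 * mp x * Ux^2 + 4 * (V x - mp x * V x) * U^2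
      + (- 4 * (m x * deriv V x) * U^2) + (8 * a x * m x * Ut * Ux + 4 * \<eta> * Ux^2 + (4 * A * MM^2 / \<eta>) * a x * Ut^2)
      + (4 * V 0 * \<rho> x * U^2 + c2 * a x * U^2 - 4 * V x * U^2)"
    unfolding GP_def GM_def D_def c1_def U_def Ut_def Ux_def by (simp add: algebra_simps)
  have "0 \<le> -(1/2) * GP s x - 4 * GM s x + 4 * V 0 * \<rho> x * (u s x)^2 + c2 * a x * (u s x)^2
             + 4 * \<eta> * (ux s x)^2 + c1 * a x * (ut s x)^2 - D s x"
    unfolding id using b1 b2 b3 b4 b5 b6 by linarith
  then show ?thesis by simp
qed

end

context wave_T begin

lemma II_lin6:
  assumes "CB g1" "CB g2" "CB g3" "CB g4" "CB g5" "CB g6"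
  shows "II (\<lambda>s x. k1 * g1 s x + k2 * g2 s x + k3 * g3 s x + k4 * g4 s x + k5 * g5 s x + k6 * g6 s x)
       = k1 * II g1 + k2 * II g2 + k3 * II g3 + k4 * II g4 + k5 * II g5 + k6 * II g6"
proof -
  note c = assms
  have C: "CB (\<lambda>s x. k * g s x)" if "CB g" for k g using that by (auto intro!: continuous_intros)
  have "II (\<lambda>s x. k1 * g1 s x + k2 * g2 s x + k3 * g3 s x + k4 * g4 s x + k5 * g5 s x + k6 * g6 s x)
     = II (\<lambda>s x. k1 * g1 s x + k2 * g2 s x + k3 * g3 s x + k4 * g4 s x + k5 * g5 s x) + II (\<lambda>s x. k6 * g6 s x)"
    by (rule II_add) (use c in \<open>auto intro!: continuous_intros\<close>)
  also have "II (\<lambda>s x. k1 * g1 s x + k2 * g2 s x + k3 * g3 s x + k4 * g4 s x + k5 * g5 s x)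
     = II (\<lambda>s x. k1 * g1 s x + k2 * g2 s x + k3 * g3 s x + k4 * g4 s x) + II (\<lambda>s x. k5 * g5 s x)"
    by (rule II_add) (use c in \<open>auto intro!: continuous_intros\<close>)
  also have "II (\<lambda>s x. k1 * g1 s x + k2 * g2 s x + k3 * g3 s x + k4 * g4 s x)
     = II (\<lambda>s x. k1 * g1 s x + k2 * g2 s x + k3 * g3 s x) + II (\<lambda>s x. k4 * g4 s x)"
    by (rule II_add) (use c in \<open>auto intro!: continuous_intros\<close>)
  also have "II (\<lambda>s x. k1 * g1 s x + k2 * g2 s x + k3 * g3 s x)
     = II (\<lambda>s x. k1 * g1 s x + k2 * g2 s x) + II (\<lambda>s x. k3 * g3 s x)"
    by (rule II_add) (use c in \<open>auto intro!: continuous_intros\<close>)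
  also have "II (\<lambda>s x. k1 * g1 s x + k2 * g2 s x) = II (\<lambda>s x. k1 * g1 s x) + II (\<lambda>s x. k2 * g2 s x)"
    by (rule II_add) (use c in \<open>auto intro!: continuous_intros\<close>)
  finally show ?thesis by (simp add: II_cmul)
qed

end

context wave_E begin

definition Et where "Et t = integral {-dd..dd} (D t)" for t
definition N0 where "N0 = integral {-dd..dd} (\<lambda>x. (u0 x)^2)"
definition N1 where "N1 = integral {-dd..dd} (\<lambda>x. (ux 0 x)^2)"
definition N2 where "N2 = integral {-dd..dd} (\<lambda>x. (u1 x)^2)"
definition N3 where "N3 = integral {-dd..dd} (\<lambda>x. (f x)^2 / V x)"

lemma T0: "0 \<le> T" by (rule T)

lemma CB_D: "CB D" unfolding D_def by (auto intro!: continuous_intros)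

lemma cD: "0 \<le> t \<Longrightarrow> continuous_on {-dd..dd} (D t)" unfolding D_def by (auto intro!: continuous_intros)

lemma Et_nn: "0 \<le> t \<Longrightarrow> 0 \<le> Et t"
  unfolding Et_def by (rule integral_nonneg) (auto intro!: integrable_continuous_real cD D_nonneg)

lemma inner_nonpos:
  assumes "0 \<le> s"
  shows "integral {-dd..dd} (\<lambda>x. -2 * a x * (ut s x)^2) \<le> 0"
proof -
  have "integral {-dd..dd} (\<lambda>x. -2 * a x * (ut s x)^2) \<le> integral {-dd..dd} (\<lambda>x. 0)"
    by (rule integral_le) (use assms a_nn in \<open>auto intro!: integrable_continuous_real continuous_intros simp: mult_nonneg_nonneg\<close>)
  then show ?thesis by simp
qed

lemma Et_mono: assumes "s \<in> {0..T}" shows "Et T \<le> Et s"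
proof -
  have s: "0 \<le> s" "s \<le> T" using assms by auto
  note E = energy_id[OF s(1) s(2) order_refl]
  have "integral {s..T} (\<lambda>r. integral {-dd..dd} (\<lambda>x. -2 * a x * (ut r x)^2)) \<le> integral {s..T} (\<lambda>r. 0)"
    by (rule integral_le[OF E(2) integrable_0]) (use s inner_nonpos in auto)
  then show ?thesis using E(1) unfolding Et_def by simp
qed

lemma Et_le0: "s \<in> {0..T} \<Longrightarrow> Et s \<le> Et 0"
proof -
  assume s: "s \<in> {0..T}"
  note E = energy_id[of 0 s]
  have "integral {0..s} (\<lambda>r. integral {-dd..dd} (\<lambda>x. -2 * a x * (ut r x)^2)) \<le> integral {0..s} (\<lambda>r. 0)"
    by (rule integral_le[OF E(2)]) (use s inner_nonpos in auto)
  then show ?thesis using E(1) s unfolding Et_def by simp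
qed

lemma AT_bound: "II (\<lambda>s x. a x * (ut s x)^2) \<le> Et 0 / 2"
proof -
  note E = energy_id[OF order_refl T0 order_refl]
  have "II (\<lambda>s x. -2 * (a x * (ut s x)^2)) = Et T - Et 0"
    using E(1) unfolding II_def Et_def by (simp add: mult.assoc)
  moreover have "II (\<lambda>s x. -2 * (a x * (ut s x)^2)) = -2 * II (\<lambda>s x. a x * (ut s x)^2)" by (rule II_cmul)
  ultimately have "-2 * II (\<lambda>s x. a x * (ut s x)^2) = Et T - Et 0" by simp
  then show ?thesis using Et_nn[OF T0] by simp
qed

lemma Et0_bound: "Et 0 \<le> N1 + N2 + Vm * N0"
proof -
  have "Et 0 \<le> integral {-dd..dd} (\<lambda>x. (u1 x)^2 + (ux 0 x)^2 + Vm * (u0 x)^2)"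
    unfolding Et_def
  proof (rule integral_le)
    show "D 0 integrable_on {-dd..dd}" by (rule integrable_continuous_real, rule cD) simp
    show "(\<lambda>x. (u1 x)^2 + (ux 0 x)^2 + Vm * (u0 x)^2) integrable_on {-dd..dd}"
      by (rule integrable_continuous_real) (auto intro!: continuous_intros)
    show "D 0 x \<le> (u1 x)^2 + (ux 0 x)^2 + Vm * (u0 x)^2" for x
      unfolding D_def init_u init_ut using V_le[of x] by (simp add: mult_right_mono)
  qed
  also have "\<dots> = N2 + N1 + Vm * N0"
    unfolding N0_def N1_def N2_def
    by (subst integral_add integral_mult, auto intro!: integrable_continuous_real continuous_intros)+
  finally show ?thesis by simp
qed

lemma II_neg2: "II (\<lambda>s x. -2 * g s x) = -2 * II g" by (rule II_cmul)

lemma W_bound: "integral {-dd..dd} (\<lambda>x. (u T x)^2) + 2 * II (\<lambda>s x. a x * (u s x)^2) \<le> N0 + N3"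
proof -
  note WI = W_id
  have e1: "integral {0..T} (\<lambda>s. integral {-dd..dd} (\<lambda>x. -2 * a x * (u s x)^2)) = -2 * II (\<lambda>s x. a x * (u s x)^2)"
    using II_neg2[of "\<lambda>s x. a x * (u s x)^2"] unfolding II_def by (simp add: mult.assoc)
  have "integral {-dd..dd} (\<lambda>x. (u T x)^2 - (f x)^2 / V x) \<le>
        integral {-dd..dd} (\<lambda>x. (u T x)^2 + (Wx T x)^2 + V x * (W T x)^2 - 2 * f x * W T x)"
  proof (rule integral_le)
    show "(\<lambda>x. (u T x)^2 - (f x)^2 / V x) integrable_on {-dd..dd}"
      using T by (intro integrable_continuous_real) (auto intro!: continuous_intros)
    show "(\<lambda>x. (u T x)^2 + (Wx T x)^2 + V x * (W T x)^2 - 2 * f x * W T x) integrable_on {-dd..dd}"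
      using T by (intro integrable_continuous_real) (auto intro!: continuous_intros)
    fix x
    have v: "0 < V x" by (rule V_pos)
    have "0 \<le> (V x * W T x - f x)^2 / V x" using v by simp
    also have "(V x * W T x - f x)^2 / V x = V x * (W T x)^2 - 2 * f x * W T x + (f x)^2 / V x"
      using v by (simp add: power2_eq_square field_simps)
    finally have "0 \<le> V x * (W T x)^2 - 2 * f x * W T x + (f x)^2 / V x" .
    moreover have "0 \<le> (Wx T x)^2" by simp
    ultimately show "(u T x)^2 - (f x)^2 / V x \<le> (u T x)^2 + (Wx T x)^2 + V x * (W T x)^2 - 2 * f x * W T x"
      by linarith
  qed
  also have "integral {-dd..dd} (\<lambda>x. (u T x)^2 - (f x)^2 / V x) = integral {-dd..dd} (\<lambda>x. (u T x)^2) - N3"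
    unfolding N3_def using T by (intro integral_diff integrable_continuous_real) (auto intro!: continuous_intros)
  finally show ?thesis using WI(1) e1 unfolding N0_def by linarith
qed

lemma poinc_II: "II (\<lambda>s x. \<rho> x * (u s x)^2) \<le> Cst * II (\<lambda>s x. (ux s x)^2) + (4*(L+1)/\<epsilon>1) * II (\<lambda>s x. a x * (u s x)^2)"
proof -
  have ep: "0 < \<epsilon>1" by (rule eps)
  have per: "integral {-dd..dd} (\<lambda>x. \<rho> x * (u s x)^2) \<le>
      integral {-dd..dd} (\<lambda>x. Cst * (ux s x)^2 + (4*(L+1)/\<epsilon>1) * (a x * (u s x)^2))" if s: "s \<in> {0..T}" for s
  proof -
    have s0: "0 \<le> s" using s by simp
    have P: "integral {-dd..dd} (\<lambda>x. \<rho> x * (u s x)^2) \<le> 4*(L+1)*(2*L+3) * integral {-dd..dd} (\<lambda>x. (ux s x)^2)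
           + 4*(L+1) * integral {L+1..L+2} (\<lambda>x. (u s x)^2)"
    proof (rule poinc[where g'="ux s"])
      show "0 < L" by (rule L)
      show "-dd \<le> -(L+1)" "L + 2 \<le> dd" using dd_gt by auto
      show "((u s) has_real_derivative ux s x) (at x)" for x using d_ux[OF s0] by simp
      show "continuous_on {-dd..dd} (ux s)" using s0 by (auto intro!: continuous_intros)
      show "continuous_on {-dd..dd} \<rho>" by (auto intro!: continuous_intros)
    qed (auto simp: \<rho>_props)
    have sub: "{L+1..L+2} \<subseteq> {-dd..dd}" using dd_gt L by auto
    have "integral {L+1..L+2} (\<lambda>x. (u s x)^2) \<le> integral {L+1..L+2} (\<lambda>x. (1/\<epsilon>1) * (a x * (u s x)^2))"
    proof (rule integral_le)
      show "(\<lambda>x. (u s x)^2) integrable_on {L+1..L+2}" "(\<lambda>x. (1/\<epsilon>1) * (a x * (u s x)^2)) integrable_on {L+1..L+2}"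
        using s0 ep by (auto intro!: integrable_continuous_real continuous_intros)
      fix x assume x: "x \<in> {L+1..L+2}"
      then have "\<epsilon>1 \<le> a x" using a_eps L by auto
      then have "1 \<le> a x / \<epsilon>1" using ep by simp
      then have "(u s x)^2 * 1 \<le> (u s x)^2 * (a x / \<epsilon>1)" by (intro mult_left_mono) auto
      then show "(u s x)^2 \<le> (1/\<epsilon>1) * (a x * (u s x)^2)" by (simp add: field_simps)
    qed
    also have "\<dots> \<le> integral {-dd..dd} (\<lambda>x. (1/\<epsilon>1) * (a x * (u s x)^2))"
      by (rule integral_subset_le[OF sub]) (use s0 ep a_nn in \<open>auto intro!: integrable_continuous_real continuous_intros\<close>)
    also have "\<dots> = (1/\<epsilon>1) * integral {-dd..dd} (\<lambda>x. a x * (u s x)^2)" by simp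
    finally have Q: "integral {L+1..L+2} (\<lambda>x. (u s x)^2) \<le> (1/\<epsilon>1) * integral {-dd..dd} (\<lambda>x. a x * (u s x)^2)" .
    have "integral {-dd..dd} (\<lambda>x. Cst * (ux s x)^2 + (4*(L+1)/\<epsilon>1) * (a x * (u s x)^2))
        = Cst * integral {-dd..dd} (\<lambda>x. (ux s x)^2) + (4*(L+1)/\<epsilon>1) * integral {-dd..dd} (\<lambda>x. a x * (u s x)^2)"
      using s0 ep by (subst integral_add) (auto intro!: integrable_continuous_real continuous_intros)
    moreover have "4*(L+1) * integral {L+1..L+2} (\<lambda>x. (u s x)^2) \<le> 4*(L+1) * ((1/\<epsilon>1) * integral {-dd..dd} (\<lambda>x. a x * (u s x)^2))"
      using Q L by (intro mult_left_mono) auto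
    ultimately show ?thesis using P unfolding Cst_def by simp
  qed
  have "II (\<lambda>s x. \<rho> x * (u s x)^2) \<le> II (\<lambda>s x. Cst * (ux s x)^2 + (4*(L+1)/\<epsilon>1) * (a x * (u s x)^2))"
    unfolding II_def
    by (rule integral_le) (use per ep in \<open>auto intro!: II_int_out continuous_intros\<close>)
  also have "\<dots> = II (\<lambda>s x. Cst * (ux s x)^2) + II (\<lambda>s x. (4*(L+1)/\<epsilon>1) * (a x * (u s x)^2))"
    by (rule II_add) (use ep in \<open>auto intro!: continuous_intros\<close>)
  also have "\<dots> = Cst * II (\<lambda>s x. (ux s x)^2) + (4*(L+1)/\<epsilon>1) * II (\<lambda>s x. a x * (u s x)^2)"
    by (simp only: II_cmul)
  finally show ?thesis .
qed

definition XP where "XP t = integral {-dd..dd} (\<lambda>x. 2 * u t x * ut t x + a x * (u t x)^2)" for t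
definition YM where "YM t = integral {-dd..dd} (\<lambda>x. 2 * m x * ut t x * ux t x)" for t

lemma GP_II: "II GP = XP T - XP 0"
  using equi_id unfolding II_def XP_def GP_def by simp

lemma GM_II: "II GM = YM T - YM 0"
  using mult_id unfolding II_def YM_def GM_def by simp

lemma XP0_bound: "XP 0 \<le> (1 + A) * N0 + N2"
proof -
  have "XP 0 \<le> integral {-dd..dd} (\<lambda>x. (1 + A) * (u0 x)^2 + (u1 x)^2)"
    unfolding XP_def
  proof (rule integral_le)
    show "(\<lambda>x. 2 * u 0 x * ut 0 x + a x * (u 0 x)^2) integrable_on {-dd..dd}"
         "(\<lambda>x. (1 + A) * (u0 x)^2 + (u1 x)^2) integrable_on {-dd..dd}"
      by (auto intro!: integrable_continuous_real continuous_intros)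
    fix x
    have "0 \<le> (u0 x - u1 x)^2" by simp
    then have "2 * u0 x * u1 x \<le> (u0 x)^2 + (u1 x)^2" by (simp add: power2_eq_square algebra_simps)
    moreover have "a x * (u0 x)^2 \<le> A * (u0 x)^2" using a_le[of x] by (simp add: mult_right_mono)
    ultimately show "2 * u 0 x * ut 0 x + a x * (u 0 x)^2 \<le> (1 + A) * (u0 x)^2 + (u1 x)^2"
      unfolding init_u init_ut by (simp add: algebra_simps)
  qed
  also have "\<dots> = (1 + A) * N0 + N2"
    unfolding N0_def N2_def by (subst integral_add) (auto intro!: integrable_continuous_real continuous_intros)
  finally show ?thesis .
qed

lemma XPT_bound: "- XP T \<le> integral {-dd..dd} (\<lambda>x. (u T x)^2) + Et T"
proof -
  have "integral {-dd..dd} (\<lambda>x. - (2 * u T x * ut T x + a x * (u T x)^2)) \<le> integral {-dd..dd} (\<lambda>x. (u T x)^2 + D T x)"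
  proof (rule integral_le)
    show "(\<lambda>x. - (2 * u T x * ut T x + a x * (u T x)^2)) integrable_on {-dd..dd}"
         "(\<lambda>x. (u T x)^2 + D T x) integrable_on {-dd..dd}"
      using T unfolding D_def by (auto intro!: integrable_continuous_real continuous_intros)
    fix x
    have "0 \<le> (u T x + ut T x)^2" by simp
    then have "- 2 * u T x * ut T x \<le> (u T x)^2 + (ut T x)^2" by (simp add: power2_eq_square algebra_simps)
    moreover have "0 \<le> a x * (u T x)^2" using a_nn[of x] by simp
    moreover have "(ut T x)^2 \<le> D T x" by (rule D_ge)
    ultimately show "- (2 * u T x * ut T x + a x * (u T x)^2) \<le> (u T x)^2 + D T x" by linarith
  qed
  also have "\<dots> = integral {-dd..dd} (\<lambda>x. (u T x)^2) + Et T"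
    unfolding Et_def using T by (subst integral_add) (auto intro!: integrable_continuous_real continuous_intros cD)
  finally have A: "integral {-dd..dd} (\<lambda>x. - (2 * u T x * ut T x + a x * (u T x)^2)) \<le> integral {-dd..dd} (\<lambda>x. (u T x)^2) + Et T" .
  show ?thesis using A integral_neg[of "{-dd..dd}" "\<lambda>x. 2 * u T x * ut T x + a x * (u T x)^2"]
    unfolding XP_def by linarith
qed

lemma YM_bound: assumes t: "0 \<le> t" shows "\<bar>YM t\<bar> \<le> MM * Et t"
proof -
  have pw: "\<bar>2 * m x * ut t x * ux t x\<bar> \<le> MM * D t x" for x
  proof -
    have "0 \<le> (\<bar>ut t x\<bar> - \<bar>ux t x\<bar>)^2" by simp
    then have h: "2 * \<bar>ut t x\<bar> * \<bar>ux t x\<bar> \<le> (ut t x)^2 + (ux t x)^2" by (simp add: power2_eq_square algebra_simps)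
    have "\<bar>2 * m x * ut t x * ux t x\<bar> = \<bar>m x\<bar> * (2 * \<bar>ut t x\<bar> * \<bar>ux t x\<bar>)" by (simp add: abs_mult)
    also have "\<dots> \<le> MM * ((ut t x)^2 + (ux t x)^2)"
      using m_bound[of x] h by (intro mult_mono) (auto simp: MM_def)
    also have "\<dots> \<le> MM * D t x"
      unfolding D_def using V_pos[of x] L by (intro mult_left_mono) (auto simp: MM_def)
    finally show ?thesis .
  qed
  have i1: "(\<lambda>x. 2 * m x * ut t x * ux t x) integrable_on {-dd..dd}"
    using t by (auto intro!: integrable_continuous_real continuous_intros)
  have i2: "(\<lambda>x. MM * D t x) integrable_on {-dd..dd}"
    using t by (auto intro!: integrable_continuous_real continuous_intros cD)
  have "YM t \<le> integral {-dd..dd} (\<lambda>x. MM * D t x)"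
    unfolding YM_def by (rule integral_le[OF i1 i2]) (use pw in \<open>auto simp: abs_le_iff\<close>)
  moreover have "- YM t \<le> integral {-dd..dd} (\<lambda>x. MM * D t x)"
  proof -
    have "integral {-dd..dd} (\<lambda>x. - (2 * m x * ut t x * ux t x)) \<le> integral {-dd..dd} (\<lambda>x. MM * D t x)"
      by (rule integral_le[OF _ i2]) (use pw i1 in \<open>auto simp: abs_le_iff intro: integrable_neg\<close>)
    then show ?thesis unfolding YM_def by simp
  qed
  moreover have "integral {-dd..dd} (\<lambda>x. MM * D t x) = MM * Et t" unfolding Et_def by simp
  ultimately show ?thesis by linarith
qed

lemma Et_int: "T * Et T \<le> II D"
proof -
  have "integral {0..T} (\<lambda>s. Et T) \<le> integral {0..T} Et"
  proof (rule integral_le)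
    show "(\<lambda>s. Et T) integrable_on {0..T}" by (rule integrable_continuous_real) (rule continuous_on_const)
    show "Et integrable_on {0..T}" unfolding Et_def using II_int_out[OF CB_D] by simp
  qed (use Et_mono in auto)
  then show ?thesis using T unfolding II_def Et_def by simp
qed

end

context wave_E begin

definition \<kappa> where "\<kappa> = 4 * V 0 * Cst + 4 * \<eta>"
definition k3 where "k3 = 4 * V 0 * (4*(L+1)/\<epsilon>1) + c2"
definition \<beta> where "\<beta> = 2 + A + Vm"
definition \<gamma> where "\<gamma> = (2*\<beta> + 1)/2 + 8*MM*\<beta> + k3/2 + c1*\<beta>/2"
definition Cf where "Cf = \<beta> + \<gamma> / (1 - \<kappa>)"

lemma kappa_lt: "\<kappa> < 1" and kappa_nn: "0 \<le> \<kappa>"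
proof -
  have c: "0 < Cst" unfolding Cst_def using L by simp
  have v: "4 * V 0 * Cst < 1" using V0small unfolding Cst_def by simp
  have w: "4 * V 0 * Cst = 4 * (V 0 * Cst)" by simp
  show "\<kappa> < 1" unfolding \<kappa>_def \<eta>_def using v unfolding w by (simp add: field_simps)
  show "0 \<le> \<kappa>" unfolding \<kappa>_def using eta_pos V_pos[of 0] c by simp
qed

lemma consts_nn: "0 \<le> MM" "0 \<le> k3" "0 \<le> c1" "0 \<le> \<beta>" "0 \<le> \<gamma>" "0 \<le> Cst"
proof -
  show m: "0 \<le> MM" unfolding MM_def using L by simp
  show k: "0 \<le> k3" unfolding k3_def c2_def using V_pos[of 0] eps L Vm_nn by simp
  show c: "0 \<le> c1" unfolding c1_def using eps eta_pos A_nn by simp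
  show b: "0 \<le> \<beta>" unfolding \<beta>_def using A_nn Vm_nn by simp
  show "0 \<le> \<gamma>" unfolding \<gamma>_def using m k c b by simp
  show "0 \<le> Cst" unfolding Cst_def using L by simp
qed

lemma N_nn: "0 \<le> N0" "0 \<le> N1" "0 \<le> N2" "0 \<le> N3"
  unfolding N0_def N1_def N2_def N3_def
  by (auto intro!: integral_nonneg integrable_continuous_real continuous_intros simp: V_pos less_imp_le)

lemma main_X: "II D \<le> -(1/2) * II GP - 4 * II GM + 4 * V 0 * II (\<lambda>s x. \<rho> x * (u s x)^2)
   + c2 * II (\<lambda>s x. a x * (u s x)^2) + 4 * \<eta> * II (\<lambda>s x. (ux s x)^2) + c1 * II (\<lambda>s x. a x * (ut s x)^2)"
proof -
  have cGP: "CB GP" unfolding GP_def by (auto intro!: continuous_intros)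
  have cGM: "CB GM" unfolding GM_def by (auto intro!: continuous_intros)
  have "II D \<le> II (\<lambda>s x. -(1/2) * GP s x - 4 * GM s x + 4 * V 0 * \<rho> x * (u s x)^2 + c2 * a x * (u s x)^2
             + 4 * \<eta> * (ux s x)^2 + c1 * a x * (ut s x)^2)"
    by (rule II_mono[OF CB_D]) (use cGP cGM PW in \<open>auto intro!: continuous_intros\<close>)
  also have "\<dots> = II (\<lambda>s x. (-(1/2)) * GP s x + (-4) * GM s x + (4 * V 0) * (\<rho> x * (u s x)^2) + c2 * (a x * (u s x)^2)
             + (4 * \<eta>) * ((ux s x)^2) + c1 * (a x * (ut s x)^2))"
    by (rule II_eq) (simp add: algebra_simps)
  also have "\<dots> = -(1/2) * II GP + (-4) * II GM + (4 * V 0) * II (\<lambda>s x. \<rho> x * (u s x)^2)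
      + c2 * II (\<lambda>s x. a x * (u s x)^2) + (4 * \<eta>) * II (\<lambda>s x. (ux s x)^2) + c1 * II (\<lambda>s x. a x * (ut s x)^2)"
    by (rule II_lin6) (use cGP cGM in \<open>auto intro!: continuous_intros\<close>)
  finally show ?thesis by simp
qed

lemma main_bound: "(1 + T) * Et T \<le> Cf * (N0 + N1 + N2 + N3)"
proof -
  define X where "X = II D"
  define Q where "Q = II (\<lambda>s x. (ux s x)^2)"
  define AU where "AU = II (\<lambda>s x. a x * (u s x)^2)"
  define AT where "AT = II (\<lambda>s x. a x * (ut s x)^2)"
  define R3 where "R3 = II (\<lambda>s x. \<rho> x * (u s x)^2)"
  define S where "S = N0 + N1 + N2 + N3"
  have Snn: "0 \<le> S" unfolding S_def using N_nn by simp
  note cn = consts_nn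
  have AUnn: "0 \<le> AU" unfolding AU_def by (rule II_nonneg) (auto intro!: continuous_intros simp: a_nn)
  have ATnn: "0 \<le> AT" unfolding AT_def by (rule II_nonneg) (auto intro!: continuous_intros simp: a_nn)
  have QX: "Q \<le> X" unfolding Q_def X_def
    by (rule II_mono[OF _ CB_D]) (auto intro!: continuous_intros simp: D_def V_pos less_imp_le)
  have Qnn: "0 \<le> Q" unfolding Q_def by (rule II_nonneg) (auto intro!: continuous_intros)
  have uT: "integral {-dd..dd} (\<lambda>x. (u T x)^2) \<ge> 0"
    using T by (auto intro!: integral_nonneg integrable_continuous_real continuous_intros)
  have WB: "integral {-dd..dd} (\<lambda>x. (u T x)^2) + 2 * AU \<le> N0 + N3" using W_bound unfolding AU_def .
  have E0: "Et 0 \<le> \<beta> * S"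
  proof -
    have "Vm * N0 \<le> (2 + A + Vm) * N0" using N_nn A_nn by (intro mult_right_mono) auto
    moreover have "N1 + N2 \<le> (2 + A + Vm) * (N1 + N2 + N3)"
    proof -
      have "1 * (N1 + N2 + N3) \<le> (2 + A + Vm) * (N1 + N2 + N3)" using N_nn A_nn Vm_nn by (intro mult_right_mono) auto
      then show ?thesis using N_nn by simp
    qed
    ultimately show ?thesis using Et0_bound unfolding \<beta>_def S_def by (simp add: algebra_simps)
  qed
  have ETm: "Et T \<le> Et 0" using Et_le0[of T] T by simp
  have XPb: "XP 0 - XP T \<le> \<beta> * S + S + \<beta> * S"
  proof -
    have "(1 + A) * N0 + N2 \<le> \<beta> * S"
    proof -
      have "(1 + A) * N0 \<le> \<beta> * N0" unfolding \<beta>_def using N_nn Vm_nn by (intro mult_right_mono) auto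
      moreover have "N2 \<le> \<beta> * (N1 + N2 + N3)"
      proof -
        have "1 * (N1 + N2 + N3) \<le> \<beta> * (N1 + N2 + N3)" unfolding \<beta>_def using N_nn A_nn Vm_nn by (intro mult_right_mono) auto
        then show ?thesis using N_nn by simp
      qed
      ultimately show ?thesis unfolding S_def by (simp add: algebra_simps)
    qed
    moreover have "N0 + N3 \<le> S" unfolding S_def using N_nn by simp
    ultimately show ?thesis using XP0_bound XPT_bound WB AUnn ETm E0 by linarith
  qed
  have YMb: "YM 0 - YM T \<le> 2 * (MM * (\<beta> * S))"
  proof -
    have "\<bar>YM 0\<bar> \<le> MM * Et 0" by (rule YM_bound) simp
    moreover have "\<bar>YM T\<bar> \<le> MM * Et T" by (rule YM_bound[OF T])
    moreover have "MM * Et T \<le> MM * Et 0" using ETm cn by (intro mult_left_mono) auto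
    moreover have "MM * Et 0 \<le> MM * (\<beta> * S)" using E0 cn by (intro mult_left_mono) auto
    ultimately show ?thesis by linarith
  qed
  have AUb: "k3 * AU \<le> k3 * (S / 2)"
  proof -
    have "2 * AU \<le> N0 + N3" using WB uT by linarith
    then have "2 * AU \<le> S" using N_nn unfolding S_def by linarith
    then have "AU \<le> S / 2" by (simp add: le_divide_eq)
    then show ?thesis using cn by (intro mult_left_mono) auto
  qed
  have ATb: "c1 * AT \<le> c1 * (\<beta> * S / 2)"
  proof -
    have "AT \<le> \<beta> * S / 2" using AT_bound E0 unfolding AT_def by linarith
    then show ?thesis using cn by (intro mult_left_mono) auto
  qed
  have R3b: "4 * V 0 * R3 \<le> 4 * V 0 * (Cst * Q + (4*(L+1)/\<epsilon>1) * AU)"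
    using poinc_II V_pos[of 0] unfolding R3_def Q_def AU_def by (intro mult_left_mono) auto
  have M: "X \<le> -(1/2) * (XP T - XP 0) - 4 * (YM T - YM 0) + 4 * V 0 * R3 + c2 * AU + 4 * \<eta> * Q + c1 * AT"
    using main_X unfolding X_def R3_def AU_def Q_def AT_def GP_II GM_II .
  have kQ: "\<kappa> * Q \<le> \<kappa> * X" using QX kappa_nn by (intro mult_left_mono) auto
  have step1: "(1 - \<kappa>) * X \<le> (1/2) * (XP 0 - XP T) + 4 * (YM 0 - YM T) + k3 * AU + c1 * AT"
  proof -
    define kk where "kk = 4*(L+1)/\<epsilon>1"
    have id: "(1/2) * (XP 0 - XP T) + 4 * (YM 0 - YM T) + k3 * AU + c1 * AT - (1 - \<kappa>) * X
      = ((-(1/2) * (XP T - XP 0) - 4 * (YM T - YM 0) + 4 * V 0 * R3 + c2 * AU + 4 * \<eta> * Q + c1 * AT) - X)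
        + (4 * V 0 * (Cst * Q + kk * AU) - 4 * V 0 * R3) + (\<kappa> * X - \<kappa> * Q)"
      unfolding \<kappa>_def k3_def kk_def by (simp add: algebra_simps)
    have n1: "0 \<le> (-(1/2) * (XP T - XP 0) - 4 * (YM T - YM 0) + 4 * V 0 * R3 + c2 * AU + 4 * \<eta> * Q + c1 * AT) - X"
      using M by simp
    have n2: "0 \<le> 4 * V 0 * (Cst * Q + kk * AU) - 4 * V 0 * R3" using R3b unfolding kk_def by simp
    have n3: "0 \<le> \<kappa> * X - \<kappa> * Q" using kQ by simp
    have "0 \<le> (1/2) * (XP 0 - XP T) + 4 * (YM 0 - YM T) + k3 * AU + c1 * AT - (1 - \<kappa>) * X"
      unfolding id by (intro add_nonneg_nonneg n1 n2 n3)
    then show ?thesis by simp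
  qed
  also have "\<dots> \<le> \<gamma> * S"
  proof -
    have id: "\<gamma> * S - ((1/2) * (XP 0 - XP T) + 4 * (YM 0 - YM T) + k3 * AU + c1 * AT)
      = (1/2) * ((\<beta> * S + S + \<beta> * S) - (XP 0 - XP T)) + 4 * (2 * (MM * (\<beta> * S)) - (YM 0 - YM T))
        + (k3 * (S / 2) - k3 * AU) + (c1 * (\<beta> * S / 2) - c1 * AT)"
      unfolding \<gamma>_def by (simp add: algebra_simps)
    have n1: "0 \<le> (1/2) * ((\<beta> * S + S + \<beta> * S) - (XP 0 - XP T))" using XPb by simp
    have n2: "0 \<le> 4 * (2 * (MM * (\<beta> * S)) - (YM 0 - YM T))" using YMb by simp
    have n3: "0 \<le> k3 * (S / 2) - k3 * AU" using AUb by simp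
    have n4: "0 \<le> c1 * (\<beta> * S / 2) - c1 * AT" using ATb by simp
    have "0 \<le> \<gamma> * S - ((1/2) * (XP 0 - XP T) + 4 * (YM 0 - YM T) + k3 * AU + c1 * AT)"
      unfolding id by (intro add_nonneg_nonneg n1 n2 n3 n4)
    then show ?thesis by simp
  qed
  finally have "(1 - \<kappa>) * X \<le> \<gamma> * S" .
  then have XB: "X \<le> \<gamma> * S / (1 - \<kappa>)" using kappa_lt by (simp add: pos_le_divide_eq mult.commute)
  have "(1 + T) * Et T = Et T + T * Et T" by (simp add: algebra_simps)
  also have "\<dots> \<le> \<beta> * S + \<gamma> * S / (1 - \<kappa>)" using Et_int ETm E0 XB unfolding X_def by linarith
  also have "\<dots> = Cf * S" unfolding Cf_def by (simp add: algebra_simps)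
  finally show ?thesis unfolding S_def .
qed

definition Vmin where "Vmin = min (V L) (V (-L))"

lemma Vmin_pos: "0 < Vmin" unfolding Vmin_def using V_pos by simp

lemma local_bound: "(1 + T) * integral {-L..L} (\<lambda>x. (u T x)^2) \<le> (Cf / Vmin) * (N0 + N1 + N2 + N3)"
proof -
  have vm: "0 < Vmin" by (rule Vmin_pos)
  have sub: "{-L..L} \<subseteq> {-dd..dd}" using dd_gt L by auto
  have "Vmin * integral {-L..L} (\<lambda>x. (u T x)^2) = integral {-L..L} (\<lambda>x. Vmin * (u T x)^2)" by simp
  also have "\<dots> \<le> integral {-L..L} (\<lambda>x. V x * (u T x)^2)"
  proof (rule integral_le)
    show "(\<lambda>x. Vmin * (u T x)^2) integrable_on {-L..L}" "(\<lambda>x. V x * (u T x)^2) integrable_on {-L..L}"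
      using T by (auto intro!: integrable_continuous_real continuous_intros)
    fix x assume x: "x \<in> {-L..L}"
    have "Vmin \<le> V x"
    proof (cases "0 \<le> x")
      case True then have "V L \<le> V x" using x by (intro V_mono1) auto
      then show ?thesis unfolding Vmin_def by simp
    next
      case False then have "V (-L) \<le> V x" using x by (intro V_mono2) auto
      then show ?thesis unfolding Vmin_def by simp
    qed
    then show "Vmin * (u T x)^2 \<le> V x * (u T x)^2" by (simp add: mult_right_mono)
  qed
  also have "\<dots> \<le> integral {-dd..dd} (\<lambda>x. V x * (u T x)^2)"
    by (rule integral_subset_le[OF sub]) (use T V_pos in \<open>auto intro!: integrable_continuous_real continuous_intros simp: less_imp_le\<close>)
  also have "\<dots> \<le> Et T" unfolding Et_def
  proof (rule integral_le)
    show "(\<lambda>x. V x * (u T x)^2) integrable_on {-dd..dd}"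
      using T by (auto intro!: integrable_continuous_real continuous_intros)
    show "D T integrable_on {-dd..dd}" using T by (intro integrable_continuous_real cD)
  qed (auto simp: D_def)
  finally have a: "Vmin * integral {-L..L} (\<lambda>x. (u T x)^2) \<le> Et T" .
  have "(1 + T) * (Vmin * integral {-L..L} (\<lambda>x. (u T x)^2)) \<le> (1 + T) * Et T"
    using a T by (intro mult_left_mono) auto
  also have "\<dots> \<le> Cf * (N0 + N1 + N2 + N3)" by (rule main_bound)
  finally have "Vmin * ((1 + T) * integral {-L..L} (\<lambda>x. (u T x)^2)) \<le> Cf * (N0 + N1 + N2 + N3)"
    by (simp add: algebra_simps)
  then show ?thesis using vm by (simp add: pos_le_divide_eq mult.commute)
qed

end

lemma lint_eq:
  fixes g :: "real \<Rightarrow> real"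
  assumes c: "continuous_on UNIV g" and z: "\<And>x. R < \<bar>x\<bar> \<Longrightarrow> g x = 0" and Rd: "R \<le> d"
  shows "(LINT x|lborel. g x) = integral {-d..d} g"
proof -
  have eq: "(\<lambda>x. indicator {-d..d} x *\<^sub>R g x) = g"
  proof
    fix x show "indicator {-d..d} x *\<^sub>R g x = g x"
    proof (cases "x \<in> {-d..d}")
      case False then have "R < \<bar>x\<bar>" using Rd by auto
      then show ?thesis using z False by simp
    qed simp
  qed
  have int: "integrable lborel (\<lambda>x. indicator {-d..d} x *\<^sub>R g x)"
    by (rule borel_integrable_compact) (auto intro: continuous_on_subset[OF c])
  have "(LINT x|lborel. g x) = (LINT x|lborel. indicator {-d..d} x *\<^sub>R g x)" by (simp only: eq)
  also have "\<dots> = integral UNIV (\<lambda>x. indicator {-d..d} x *\<^sub>R g x)" by (rule integral_lborel[OF int, symmetric])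
  also have "\<dots> = integral UNIV (\<lambda>x. if x \<in> {-d..d} then g x else 0)"
    by (rule integral_cong) (simp add: indicator_def)
  also have "\<dots> = integral {-d..d} g" by (rule Henstock_Kurzweil_Integration.integral_restrict_UNIV)
  finally show ?thesis .
qed

lemma lbint_eq:
  fixes g :: "real \<Rightarrow> real"
  assumes c: "continuous_on UNIV g"
  shows "(LBINT x:{-L..L}. g x) = integral {-L..L} g"
proof -
  have "set_integrable lborel {-L..L} g"
    unfolding set_integrable_def
    by (rule borel_integrable_compact) (auto intro: continuous_on_subset[OF c])
  then show ?thesis by (rule set_borel_integral_eq_integral(2))
qed

definition Cexpl :: "real \<Rightarrow> (real \<Rightarrow> real) \<Rightarrow> real \<Rightarrow> real \<Rightarrow> real \<Rightarrow> real" where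
  "Cexpl L V \<epsilon>1 A Vm =
    (let Cst = 4*(L+1)*(2*L+3); \<eta> = (1 - 4 * V 0 * Cst) / 8; MM = L * pi / 2;
         c1 = 4 * A * MM^2 / \<eta> + 2 / \<epsilon>1; c2 = 4 * Vm / \<epsilon>1;
         \<kappa> = 4 * V 0 * Cst + 4 * \<eta>; k3 = 4 * V 0 * (4*(L+1)/\<epsilon>1) + c2;
         \<beta> = 2 + A + Vm; \<gamma> = (2*\<beta> + 1)/2 + 8*MM*\<beta> + k3/2 + c1*\<beta>/2
     in (\<beta> + \<gamma> / (1 - \<kappa>)) / min (V L) (V (-L)))"

context wave_E begin

lemma Cexpl_eq: "Cf / Vmin = Cexpl L V \<epsilon>1 A Vm"
  unfolding Cexpl_def Cf_def Vmin_def \<beta>_def \<gamma>_def \<kappa>_def k3_def c1_def c2_def MM_def \<eta>_def Cst_def Let_def ..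

lemma Cexpl_pos: "0 < Cexpl L V \<epsilon>1 A Vm"
proof -
  have "0 \<le> \<gamma> / (1 - \<kappa>)" using consts_nn kappa_lt by simp
  then have "0 < Cf" unfolding Cf_def using A_nn Vm_nn by (simp add: \<beta>_def)
  then show ?thesis using Vmin_pos Cexpl_eq[symmetric] by simp
qed

lemma deriv_u0: "deriv u0 x = ux 0 x"
proof -
  have "(u0 has_real_derivative ux 0 x) (at x)" using d_ux[of 0 x] init_u by simp
  then show ?thesis by (rule DERIV_imp_deriv)
qed

lemma final_local:
  "(1 + T) * (LBINT x:{-L..L}. (u T x)^2) \<le> Cexpl L V \<epsilon>1 A Vm * I0sq a V u0 u1"
proof -
  have Rd: "R0 \<le> dd" using dd_gt T by simp
  have e1: "(LBINT x:{-L..L}. (u T x)^2) = integral {-L..L} (\<lambda>x. (u T x)^2)"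
    by (rule lbint_eq) (use T in \<open>auto intro!: continuous_intros\<close>)
  have n0: "(LINT x|lborel. (u0 x)^2) = N0" unfolding N0_def
    by (rule lint_eq[OF _ _ Rd]) (auto intro!: continuous_intros simp: supp0)
  have n1: "(LINT x|lborel. (deriv u0 x)^2) = N1" unfolding N1_def deriv_u0
    by (rule lint_eq[OF _ _ Rd]) (auto intro!: continuous_intros simp: ux0_zero)
  have n2: "(LINT x|lborel. (u1 x)^2) = N2" unfolding N2_def
    by (rule lint_eq[OF _ _ Rd]) (auto intro!: continuous_intros simp: supp1)
  have sq: "((u1 x + a x * u0 x) / sqrt (V x))^2 = (f x)^2 / V x" for x
    using V_pos[of x] unfolding f_def by (simp add: power_divide)
  have n3: "(LINT x|lborel. ((u1 x + a x * u0 x) / sqrt (V x))^2) = N3" unfolding N3_def sq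
    by (rule lint_eq[OF _ _ Rd]) (auto intro!: continuous_intros simp: f_def supp0 supp1)
  have "I0sq a V u0 u1 = N0 + N1 + N2 + N3"
    unfolding I0sq_def n0 n1 n2 n3 ..
  then show ?thesis using local_bound e1 Cexpl_eq by simp
qed

end

lemma Cexpl_pos_global:
  assumes L: "0 < L" and eps: "0 < \<epsilon>1" and a: "continuous_on UNIV a" "\<And>x. 0 \<le> a x" "\<And>x. a x \<le> A"
    "\<And>x. L \<le> \<bar>x\<bar> \<Longrightarrow> \<epsilon>1 \<le> a x"
    and V: "continuous_on UNIV V" "\<And>x. 0 < V x" "\<And>x. V x \<le> Vm" "\<And>x. (V has_real_derivative deriv V x) (at x)"
      "continuous_on UNIV (deriv V)" "\<And>x. deriv V x * x \<le> 0"
    and small: "4 * V 0 * (4*(L+1)*(2*L+3)) < 1"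
  shows "0 < Cexpl L V \<epsilon>1 A Vm"
proof -
  interpret Z: wave_E a V "\<lambda>_. 0" "\<lambda>_. 0" "\<lambda>_ _. 0" "\<lambda>_ _. 0" "\<lambda>_ _. 0" "\<lambda>_ _. 0" "\<lambda>_ _. 0" "\<lambda>_ _. 0"
    A Vm 0 0 L \<epsilon>1
    by unfold_locales (use L eps a V small in \<open>auto intro!: continuous_intros\<close>)
  show ?thesis by (rule Z.Cexpl_pos)
qed

theorem proposition2p3:
  "\<forall>L::real. L > 0 \<longrightarrow> (\<exists>Cstar::real. Cstar > 0 \<and>
     (\<forall>(a::real \<Rightarrow> real) (V::real \<Rightarrow> real) (\<epsilon>1::real).
        BC a \<and> (\<forall>x. a x \<ge> 0) \<and> \<epsilon>1 > 0 \<and> (\<forall>x. \<bar>x\<bar> \<ge> L \<longrightarrow> a x \<ge> \<epsilon>1) \<and>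
        BC1 V \<and> (\<forall>x. V x > 0) \<and> (\<forall>x. deriv V x * x \<le> 0) \<and>
        V 0 < 1 / (4 * Cstar) \<longrightarrow>
        (\<exists>C::real. C > 0 \<and>
           (\<forall>u0 u1 (u::real \<Rightarrow> real \<Rightarrow> real).
              C0_inf u0 \<and> C0_inf u1 \<and> is_solution a V u0 u1 u \<longrightarrow>
              (\<forall>t\<ge>0. (1 + t) * (LBINT x:{-L..L}. (u t x)\<^sup>2) \<le> C * I0sq a V u0 u1)))))"
proof (intro allI impI)
  fix L :: real assume L: "L > 0"
  define Cs where "Cs = 4*(L+1)*(2*L+3)"
  have Cs_pos: "Cs > 0" unfolding Cs_def using L by simp
  show "\<exists>Cstar::real. Cstar > 0 \<and>
     (\<forall>(a::real \<Rightarrow> real) (V::real \<Rightarrow> real) (\<epsilon>1::real).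
        BC a \<and> (\<forall>x. a x \<ge> 0) \<and> \<epsilon>1 > 0 \<and> (\<forall>x. \<bar>x\<bar> \<ge> L \<longrightarrow> a x \<ge> \<epsilon>1) \<and>
        BC1 V \<and> (\<forall>x. V x > 0) \<and> (\<forall>x. deriv V x * x \<le> 0) \<and>
        V 0 < 1 / (4 * Cstar) \<longrightarrow>
        (\<exists>C::real. C > 0 \<and>
           (\<forall>u0 u1 (u::real \<Rightarrow> real \<Rightarrow> real).
              C0_inf u0 \<and> C0_inf u1 \<and> is_solution a V u0 u1 u \<longrightarrow>
              (\<forall>t\<ge>0. (1 + t) * (LBINT x:{-L..L}. (u t x)\<^sup>2) \<le> C * I0sq a V u0 u1))))"
  proof (rule exI[of _ Cs], intro conjI allI impI, fact Cs_pos)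
    fix a V :: "real \<Rightarrow> real" and \<epsilon>1 :: real
    assume H: "BC a \<and> (\<forall>x. a x \<ge> 0) \<and> \<epsilon>1 > 0 \<and> (\<forall>x. \<bar>x\<bar> \<ge> L \<longrightarrow> a x \<ge> \<epsilon>1) \<and>
        BC1 V \<and> (\<forall>x. V x > 0) \<and> (\<forall>x. deriv V x * x \<le> 0) \<and> V 0 < 1 / (4 * Cs)"
    have a_cont: "continuous_on UNIV a" and a_bd: "bounded (range a)" using H unfolding BC_def by auto
    obtain A where A: "\<And>x. a x \<le> A"
      using a_bd unfolding bounded_real by (metis abs_le_D1 rangeI)
    have V_cont: "continuous_on UNIV V" and V_bd: "bounded (range V)" using H unfolding BC1_def BC_def by auto
    obtain Vm where Vm: "\<And>x. V x \<le> Vm"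
      using V_bd unfolding bounded_real by (metis abs_le_D1 rangeI)
    have V'_cont: "continuous_on UNIV (deriv V)" using H unfolding BC1_def BC_def by auto
    have V_der: "\<And>x. (V has_real_derivative deriv V x) (at x)"
      using H unfolding BC1_def by (simp add: DERIV_deriv_iff_real_differentiable)
    have small: "4 * V 0 * (4*(L+1)*(2*L+3)) < 1"
    proof -
      have "V 0 < 1 / (4 * Cs)" using H by simp
      then have "V 0 * (4 * Cs) < 1" using Cs_pos by (simp add: pos_less_divide_eq)
      then show ?thesis unfolding Cs_def by (simp add: algebra_simps)
    qed
    have eps: "0 < \<epsilon>1" and a_nn: "\<And>x. 0 \<le> a x" and a_eps: "\<And>x. L \<le> \<bar>x\<bar> \<Longrightarrow> \<epsilon>1 \<le> a x"
      and V_pos: "\<And>x. 0 < V x" and V_sign: "\<And>x. deriv V x * x \<le> 0" using H by auto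
    have Cpos: "0 < Cexpl L V \<epsilon>1 A Vm"
      by (rule Cexpl_pos_global[OF L eps a_cont a_nn A a_eps V_cont V_pos Vm V_der V'_cont V_sign small])
    show "\<exists>C::real. C > 0 \<and>
           (\<forall>u0 u1 (u::real \<Rightarrow> real \<Rightarrow> real).
              C0_inf u0 \<and> C0_inf u1 \<and> is_solution a V u0 u1 u \<longrightarrow>
              (\<forall>t\<ge>0. (1 + t) * (LBINT x:{-L..L}. (u t x)\<^sup>2) \<le> C * I0sq a V u0 u1))"
    proof (rule exI[of _ "Cexpl L V \<epsilon>1 A Vm"], intro conjI allI impI, fact Cpos)
      fix u0 u1 :: "real \<Rightarrow> real" and u :: "real \<Rightarrow> real \<Rightarrow> real" and t :: real
      assume U: "C0_inf u0 \<and> C0_inf u1 \<and> is_solution a V u0 u1 u" and t: "0 \<le> t"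
      obtain ut ux utt utx uxx :: "real \<Rightarrow> real \<Rightarrow> real" where S:
        "\<forall>t\<ge>0. \<forall>x.
         ((\<lambda>s. u s x) has_real_derivative ut t x) (at t within {0..}) \<and>
         ((\<lambda>y. u t y) has_real_derivative ux t x) (at x) \<and>
         ((\<lambda>s. ut s x) has_real_derivative utt t x) (at t within {0..}) \<and>
         ((\<lambda>y. ut t y) has_real_derivative utx t x) (at x) \<and>
         ((\<lambda>y. ux t y) has_real_derivative uxx t x) (at x) \<and>
         utt t x - uxx t x + V x * u t x + a x * ut t x = 0"
        "continuous_on ({0..} \<times> UNIV) (\<lambda>(t,x). u t x)"
        "continuous_on ({0..} \<times> UNIV) (\<lambda>(t,x). ut t x)"
        "continuous_on ({0..} \<times> UNIV) (\<lambda>(t,x). ux t x)"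
        "continuous_on ({0..} \<times> UNIV) (\<lambda>(t,x). utt t x)"
        "continuous_on ({0..} \<times> UNIV) (\<lambda>(t,x). utx t x)"
        "continuous_on ({0..} \<times> UNIV) (\<lambda>(t,x). uxx t x)"
        "\<forall>x. u 0 x = u0 x" "\<forall>x. ut 0 x = u1 x"
        using U unfolding is_solution_def by blast
      obtain r0 where r0: "\<And>x. u0 x \<noteq> 0 \<Longrightarrow> \<bar>x\<bar> \<le> r0"
        using U unfolding C0_inf_def bounded_real by blast
      obtain r1 where r1: "\<And>x. u1 x \<noteq> 0 \<Longrightarrow> \<bar>x\<bar> \<le> r1"
        using U unfolding C0_inf_def bounded_real by blast
      define R0 where "R0 = max 0 (max r0 r1)"
      have supp0: "\<And>x. R0 < \<bar>x\<bar> \<Longrightarrow> u0 x = 0" using r0 unfolding R0_def by force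
      have supp1: "\<And>x. R0 < \<bar>x\<bar> \<Longrightarrow> u1 x = 0" using r1 unfolding R0_def by force
      interpret E: wave_E a V u0 u1 u ut ux utt utx uxx A Vm R0 t L \<epsilon>1
      proof unfold_locales
      qed (use S L eps a_cont a_nn A a_eps V_cont V_pos Vm V_der V'_cont V_sign small supp0 supp1 t in \<open>auto simp: R0_def\<close>)
      show "(1 + t) * (LBINT x:{-L..L}. (u t x)\<^sup>2) \<le> Cexpl L V \<epsilon>1 A Vm * I0sq a V u0 u1"
        by (rule E.final_local)
    qed
  qed
qed

end
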